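(* Let $(M,\mathrm{dist})$ be a compact metric space endowed with a finite Borel measure $\mu$ such that $\mu(U)>0$ for every nonempty open set $U\subset M$, and let $f\colon M\to M$ be a homeomorphism. Let $\Lambda\subset M$ be a transitive attractor of $f$ such that $f$ does not have the shadowing property on $\Lambda$. Then there exists $\varepsilon_0>0$ such that for every $y_0\in D(\Lambda)$ there exists $d_0>0$ such that for every $d\in(0,d_0)$, $$p(y_0,d,\varepsilon_0)=0,$$ i.e. a random $d$-pseudotrajectory starting at $y_0$ can be $\varepsilon_0$-shadowed with probability $0$.
   Context: For $a>0$ and $x\in M$, $B(a,x)$ denotes the open ball of radius $a$ centered at $x$. For $d>0$, a sequence $\{y_n\}_{n\ge 0}$ (or finite $\{y_n\}_{n=0}^N$) in $M$ is a $d$-pseudotrajectory if $\mathrm{dist}(y_{n+1},f(y_n))\le d$ for all admissible $n$. It is $\varepsilon$-shadowed if there is $x_0\in M$ with $\mathrm{dist}(y_n,f^n(x_0))\le\varepsilon$ for all admissible $n$. A compact set $\Lambda$ with $f(\Lambda)=\Lambda$ is an attractor if there exists an open neighborhood $U$ of $\Lambda$ with $f(U)\subset U$ and $\bigcap_{n\ge0}f^n(U)=\Lambda$. Its domain of attraction is $D(\Lambda)=\{x\in M: \mathrm{dist}(f^n(x),\Lambda)\to 0 \text{ as } n\to\infty\}$. $\Lambda$ is transitive if there exists $r\in\Lambda$ with $\Lambda=\overline{\{f^n(r):n\ge0\}}$. The map $f$ has the shadowing property on $\Lambda$ if for every $\varepsilon>0$ there exists $d>0$ such that for every $d$-pseudotrajectory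 $\{y_n\}_{n\ge0}\subset\Lambda$ there exists $x_0\in M$ (not necessarily in $\Lambda$) with $\mathrm{dist}(y_n,f^n(x_0))\le\varepsilon$ for all $n\ge0$. Random pseudotrajectories: for $y_0\in M$ and $d>0$, let $\Omega(y_0,d)$ be the set of all infinite $d$-pseudotrajectories starting at $y_0$, equipped with the probability measure $P^{y_0,d}$ of the Markov chain starting at $y_0$ with transition law: given $y_n$, the point $y_{n+1}$ is chosen uniformly in $B(d,f(y_n))$ with respect to $\mu$, i.e. $P(y_{n+1}\in A\mid y_n)=\mu(A\cap B(d,f(y_n)))/\mu(B(d,f(y_n)))$ for measurable $A\subset M$. For $\varepsilon>0$, $Sh(y_0,d,\varepsilon)\subset\Omega(y_0,d)$ is the (measurable) set of pseudotrajectories that can be $\varepsilon$-shadowed, and $p(y_0,d,\varepsilon)=P^{y_0,d}(Sh(y_0,d,\varepsilon))$. *)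

theory Defs
  imports "HOL-Probability.Probability"
begin

text \<open>Open ball B(a,x) is the library's ball x a. M is the whole type 'a.\<close>

definition is_pseudotrajectory :: "('a::metric_space \<Rightarrow> 'a) \<Rightarrow> real \<Rightarrow> (nat \<Rightarrow> 'a) \<Rightarrow> bool" where
  "is_pseudotrajectory f d y \<longleftrightarrow> (\<forall>n. dist (y (Suc n)) (f (y n)) \<le> d)"

definition shadowed :: "('a::metric_space \<Rightarrow> 'a) \<Rightarrow> real \<Rightarrow> (nat \<Rightarrow> 'a) \<Rightarrow> bool" where
  "shadowed f eps y \<longleftrightarrow> (\<exists>x0. \<forall>n. dist (y n) ((f ^^ n) x0) \<le> eps)"

definition is_attractor :: "('a::metric_space \<Rightarrow> 'a) \<Rightarrow> 'a set \<Rightarrow> bool" where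
  "is_attractor f \<Lambda> \<longleftrightarrow> compact \<Lambda> \<and> f ` \<Lambda> = \<Lambda> \<and>
     (\<exists>U. open U \<and> \<Lambda> \<subseteq> U \<and> f ` U \<subseteq> U \<and> (\<Inter>n. (f ^^ n) ` U) = \<Lambda>)"

definition domain_of_attraction :: "('a::metric_space \<Rightarrow> 'a) \<Rightarrow> 'a set \<Rightarrow> 'a set" where
  "domain_of_attraction f \<Lambda> = {x. (\<lambda>n. infdist ((f ^^ n) x) \<Lambda>) \<longlonglongrightarrow> 0}"

definition transitive_set :: "('a::metric_space \<Rightarrow> 'a) \<Rightarrow> 'a set \<Rightarrow> bool" where
  "transitive_set f \<Lambda> \<longleftrightarrow> (\<exists>r\<in>\<Lambda>. \<Lambda> = closure (range (\<lambda>n. (f ^^ n) r)))"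

definition shadowing_on :: "('a::metric_space \<Rightarrow> 'a) \<Rightarrow> 'a set \<Rightarrow> bool" where
  "shadowing_on f \<Lambda> \<longleftrightarrow> (\<forall>eps>0. \<exists>d>0. \<forall>y. (\<forall>n. y n \<in> \<Lambda>) \<and> is_pseudotrajectory f d y
      \<longrightarrow> shadowed f eps y)"

definition Omega :: "('a::metric_space \<Rightarrow> 'a) \<Rightarrow> 'a \<Rightarrow> real \<Rightarrow> (nat \<Rightarrow> 'a) set" where
  "Omega f y0 d = {y. y 0 = y0 \<and> is_pseudotrajectory f d y}"

definition Sh :: "('a::metric_space \<Rightarrow> 'a) \<Rightarrow> 'a \<Rightarrow> real \<Rightarrow> real \<Rightarrow> (nat \<Rightarrow> 'a) set" where
  "Sh f y0 d eps = {y \<in> Omega f y0 d. shadowed f eps y}"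

text \<open>Transition probability: y_{n+1} uniform in B(d, f y_n) w.r.t. mu.\<close>
definition trans_prob :: "'a::metric_space measure \<Rightarrow> ('a \<Rightarrow> 'a) \<Rightarrow> real \<Rightarrow> 'a \<Rightarrow> 'a set \<Rightarrow> real" where
  "trans_prob \<mu> f d y A = measure \<mu> (A \<inter> ball (f y) d) / measure \<mu> (ball (f y) d)"

text \<open>P is the law P^{y0,d} of the Markov chain started at y0 with the above transition law,
  as a probability measure on sequences (product sigma-algebra). The Markov property is stated
  as: for every n, every event B depending only on coordinates 0..n and every Borel A,
  P(B and y_{n+1} in A) = integral over B of the transition probability from y_n into A.
  This determines P uniquely.\<close>
definition random_pt_law :: "'a::metric_space measure \<Rightarrow> ('a \<Rightarrow> 'a) \<Rightarrow> 'a \<Rightarrow> real \<Rightarrow> (nat \<Rightarrow> 'a) measure \<Rightarrow> bool" where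
  "random_pt_law \<mu> f y0 d P \<longleftrightarrow>
     prob_space P \<and> sets P = sets (Pi\<^sub>M UNIV (\<lambda>_. borel)) \<and>
     emeasure P {y. y 0 = y0} = 1 \<and>
     (\<forall>n C A. C \<in> sets (Pi\<^sub>M {..n} (\<lambda>_. borel)) \<longrightarrow> A \<in> sets borel \<longrightarrow>
        emeasure P {y. restrict y {..n} \<in> C \<and> y (Suc n) \<in> A}
          = (\<integral>\<^sup>+ y. indicator {y. restrict y {..n} \<in> C} y * ennreal (trans_prob \<mu> f d (y n) A) \<partial>P))"

end

theory Submission
  imports Defs
begin


lemma infdist_lessE:
  assumes "infdist x A < e" "A \<noteq> {}"
  obtains a where "a \<in> A" "dist x a < e"
proof -
  have "(INF a\<in>A. dist x a) < e" using assms by (simp add: infdist_def)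
  then obtain a where "a \<in> A" "dist x a < e"
    using assms(2) by (auto simp: cINF_less_iff)
  then show ?thesis using that by blast
qed

lemma fip_nat:
  fixes F :: "nat \<Rightarrow> 'a::metric_space set"
  assumes cpt: "compact (UNIV::'a set)" and cl: "\<And>i. closed (F i)"
    and dec: "\<And>i. F (Suc i) \<subseteq> F i" and ne: "\<And>i. F i \<noteq> {}"
  shows "\<exists>x. \<forall>i. x \<in> F i"
proof -
  have decm: "F j \<subseteq> F i" if "i \<le> j" for i j
    using that by (induction rule: dec_induct) (use dec in auto)
  have "UNIV \<inter> (\<Inter>i\<in>UNIV. F i) \<noteq> {}"
  proof (rule compact_imp_fip_image[OF cpt])
    fix I' :: "nat set" assume "finite I'" "I' \<subseteq> UNIV"
    then obtain m where m: "\<forall>i\<in>I'. i \<le> m"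
      using finite_nat_set_iff_bounded_le by blast
    have "F m \<subseteq> (\<Inter>i\<in>I'. F i)" using m decm by blast
    then show "UNIV \<inter> (\<Inter>i\<in>I'. F i) \<noteq> {}" using ne[of m] by blast
  qed (use cl in auto)
  then show ?thesis by blast
qed

lemma fin_inter:
  fixes E :: "nat \<Rightarrow> 'a::metric_space set"
  assumes cpt: "compact (UNIV::'a set)" and cl: "\<And>j. closed (E j)"
    and sub: "(\<Inter>j. E j) \<subseteq> V" and op: "open V"
  shows "\<exists>J. (\<Inter>j\<in>{..J}. E j) \<subseteq> V"
proof (rule ccontr)
  assume H: "\<not> ?thesis"
  define F where "F i = (\<Inter>j\<in>{..i}. E j) - V" for i
  have "\<exists>x. \<forall>i. x \<in> F i"
  proof (rule fip_nat[OF cpt])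
    show "closed (F i)" for i unfolding F_def using cl op by (intro closed_Diff closed_INT) auto
    show "F (Suc i) \<subseteq> F i" for i unfolding F_def by auto
    show "F i \<noteq> {}" for i using H unfolding F_def by blast
  qed
  then obtain x where "\<forall>i. x \<in> F i" by blast
  then have "x \<in> (\<Inter>j. E j)" "x \<notin> V" unfolding F_def by auto
  then show False using sub by blast
qed



locale dyn =
  fixes f g :: "'a::metric_space \<Rightarrow> 'a" and \<Lambda> :: "'a set"
  assumes cpt: "compact (UNIV::'a set)"
  and hom: "homeomorphism UNIV UNIV f g"
  and att: "is_attractor f \<Lambda>" and tr: "transitive_set f \<Lambda>"
  fixes U :: "'a set"
  assumes Uop: "open U" and LU: "\<Lambda> \<subseteq> U" and fU: "f ` U \<subseteq> U" and UL: "(\<Inter>n. (f ^^ n) ` U) = \<Lambda>"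
begin

lemma cf: "continuous_on UNIV f" using hom by (simp add: homeomorphism_def)

lemma cfn: "continuous_on UNIV (f^^n)"
proof (induction n)
  case 0 then show ?case by (simp add: continuous_on_id)
next
  case (Suc n)
  then show ?case using cf by (simp add: continuous_on_compose2[OF cf Suc])
qed

lemma ucfn: "uniformly_continuous_on UNIV (f^^n)"
  by (rule compact_uniformly_continuous[OF cfn cpt])

lemma ucfn': "e > 0 \<Longrightarrow> \<exists>\<delta>>0. \<forall>u v. dist u v < \<delta> \<longrightarrow> dist ((f^^n) u) ((f^^n) v) < e"
  using ucfn[of n] unfolding uniformly_continuous_on_def by (metis UNIV_I dist_commute)

lemma ucf: "e > 0 \<Longrightarrow> \<exists>\<delta>>0. \<forall>u v. dist u v < \<delta> \<longrightarrow> dist (f u) (f v) < e"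
  using ucfn'[of e 1] by simp

lemma ucN: "e > 0 \<Longrightarrow> \<exists>\<delta>>0. \<forall>u v. dist u v < \<delta> \<longrightarrow> (\<forall>n\<le>N. dist ((f^^n) u) ((f^^n) v) < e)"
proof (induction N)
  case 0 then show ?case by (intro exI[of _ e]) auto
next
  case (Suc N)
  then obtain d1 where d1: "d1 > 0" "\<forall>u v. dist u v < d1 \<longrightarrow> (\<forall>n\<le>N. dist ((f^^n) u) ((f^^n) v) < e)" by blast
  obtain d2 where d2: "d2 > 0" "\<forall>u v. dist u v < d2 \<longrightarrow> dist ((f^^Suc N) u) ((f^^Suc N) v) < e"
    using ucfn'[OF Suc.prems] by blast
  show ?case
    apply (rule exI[of _ "min d1 d2"])
    using d1 d2 by (auto simp: le_Suc_eq)
qed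

lemma Lcpt: "compact \<Lambda>" and fL: "f ` \<Lambda> = \<Lambda>"
  using att by (auto simp: is_attractor_def)

lemma Lne: "\<Lambda> \<noteq> {}" using tr by (auto simp: transitive_set_def)

lemma Lcl: "closed \<Lambda>" using Lcpt compact_imp_closed by blast

lemma fnL: "(f^^n) ` \<Lambda> = \<Lambda>"
proof (induction n)
  case (Suc n)
  have "(f^^Suc n) ` \<Lambda> = f ` ((f^^n) ` \<Lambda>)" by (simp add: image_comp)
  then show ?case using Suc fL by simp
qed simp

lemma fnLin: "x \<in> \<Lambda> \<Longrightarrow> (f^^n) x \<in> \<Lambda>" using fnL by blast

lemma closed_img: "closed S \<Longrightarrow> closed ((f^^n) ` S)"
proof -
  assume "closed S"
  then have "compact S" using compact_Int_closed[OF cpt, of S] by simp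
  then have "compact ((f^^n) ` S)" using compact_continuous_image continuous_on_subset[OF cfn] by blast
  then show ?thesis by (rule compact_imp_closed)
qed

lemma Kcl: "closed {x. infdist x \<Lambda> \<le> e}"
  by (intro closed_Collect_le continuous_on_const continuous_intros)

lemma Bop: "open {x. infdist x \<Lambda> < e}"
  by (intro open_Collect_less continuous_on_const continuous_intros)

lemma nbhd:
  assumes "open V" "\<Lambda> \<subseteq> V"
  shows "\<exists>e>0. {x. infdist x \<Lambda> \<le> e} \<subseteq> V"
proof (cases "- V = {}")
  case True then show ?thesis by (intro exI[of _ 1]) auto
next
  case False
  have "compact (- V)" using assms(1) cpt by (simp add: closed_Compl compact_Int_closed[of UNIV "-V", simplified])
  then obtain x where x: "x \<in> - V" "\<forall>y\<in>- V. infdist x \<Lambda> \<le> infdist y \<Lambda>"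
    using continuous_attains_inf[OF _ False continuous_on_infdist[OF continuous_on_id], of \<Lambda>] by blast
  have "infdist x \<Lambda> > 0" using infdist_pos_not_in_closed[OF Lcl Lne] x assms(2) by blast
  then show ?thesis using x
    by (intro exI[of _ "infdist x \<Lambda> / 2"]) force
qed

end


context dyn begin

lemma infdist_Lam0: "x \<in> \<Lambda> \<Longrightarrow> infdist x \<Lambda> = 0" by simp

lemma one_step_e: "e > 0 \<Longrightarrow> \<exists>\<delta>>0. \<forall>z. infdist z \<Lambda> < \<delta> \<longrightarrow> infdist (f z) \<Lambda> < e"
proof -
  assume "e > 0"
  then obtain \<delta> where d: "\<delta> > 0" "\<forall>u v. dist u v < \<delta> \<longrightarrow> dist (f u) (f v) < e" using ucf by blast
  have "infdist (f z) \<Lambda> < e" if zz: "infdist z \<Lambda> < \<delta>" for z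
  proof -
    obtain a where a: "a \<in> \<Lambda>" "dist z a < \<delta>" by (rule infdist_lessE[OF zz Lne])
    have "f a \<in> \<Lambda>" using a fL by blast
    then have "infdist (f z) \<Lambda> \<le> dist (f z) (f a)" by (rule infdist_le)
    also have "\<dots> < e" using d a by blast
    finally show ?thesis .
  qed
  then show ?thesis using d by blast
qed

lemma stepsJ: "e > 0 \<Longrightarrow> \<exists>\<delta>>0. \<forall>x. infdist x \<Lambda> < \<delta> \<longrightarrow> (\<forall>j\<le>J. infdist ((f^^j) x) \<Lambda> < e)"
proof (induction J arbitrary: e)
  case 0 then show ?case by (intro exI[of _ e]) auto
next
  case (Suc J)
  obtain df where df: "df > 0" "\<forall>z. infdist z \<Lambda> < df \<longrightarrow> infdist (f z) \<Lambda> < e"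
    using one_step_e[OF Suc.prems] by blast
  obtain \<delta> where d: "\<delta> > 0" "\<forall>x. infdist x \<Lambda> < \<delta> \<longrightarrow> (\<forall>j\<le>J. infdist ((f^^j) x) \<Lambda> < min e df)"
    using Suc.IH[of "min e df"] Suc.prems df by auto
  show ?case
  proof (intro exI[of _ \<delta>] conjI allI impI)
    fix x j assume x: "infdist x \<Lambda> < \<delta>" and j: "j \<le> Suc J"
    show "infdist ((f^^j) x) \<Lambda> < e"
    proof (cases "j = Suc J")
      case True
      have "infdist ((f^^J) x) \<Lambda> < df" using d x by auto
      then show ?thesis using df True by simp
    next
      case False
      then have "j \<le> J" using j by simp
      then have "infdist ((f^^j) x) \<Lambda> < min e df" using d x by blast
      then show ?thesis by simp
    qed
  qed (use d in auto)
qed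

lemma funpow_split: "j \<le> n \<Longrightarrow> (f^^n) x = (f^^j) ((f^^(n-j)) x)"
  by (metis funpow_add le_add_diff_inverse comp_apply)

lemma lyap:
  assumes "0 < \<epsilon>" "{x. infdist x \<Lambda> \<le> \<epsilon>} \<subseteq> U"
  shows "\<exists>\<delta>>0. \<forall>x. infdist x \<Lambda> < \<delta> \<longrightarrow> (\<forall>n. infdist ((f^^n) x) \<Lambda> < \<epsilon>)"
proof -
  define K where "K = {x. infdist x \<Lambda> \<le> \<epsilon>}"
  obtain df where df: "df > 0" "\<forall>z. infdist z \<Lambda> < df \<longrightarrow> infdist (f z) \<Lambda> < \<epsilon>"
    using one_step_e[OF assms(1)] by blast
  define e1 where "e1 = min \<epsilon> df"
  have e1: "e1 > 0" "e1 \<le> \<epsilon>" "e1 \<le> df" using df assms unfolding e1_def by auto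
  have sub: "(\<Inter>j. (f^^j) ` K) \<subseteq> {x. infdist x \<Lambda> < e1}"
  proof -
    have "(\<Inter>j. (f^^j) ` K) \<subseteq> (\<Inter>j. (f^^j) ` U)" using assms(2) unfolding K_def by blast
    also have "\<dots> = \<Lambda>" by (rule UL)
    also have "\<dots> \<subseteq> {x. infdist x \<Lambda> < e1}" using e1 by auto
    finally show ?thesis .
  qed
  obtain J where J: "(\<Inter>j\<in>{..J}. (f^^j) ` K) \<subseteq> {x. infdist x \<Lambda> < e1}"
    using fin_inter[OF cpt _ sub Bop] closed_img[OF Kcl] unfolding K_def by blast
  obtain \<delta> where d: "\<delta> > 0" "\<forall>x. infdist x \<Lambda> < \<delta> \<longrightarrow> (\<forall>j\<le>J. infdist ((f^^j) x) \<Lambda> < e1)"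
    using stepsJ[OF e1(1)] by blast
  have main: "infdist ((f^^n) x) \<Lambda> < e1" if x: "infdist x \<Lambda> < \<delta>" for x n
  proof (induction n rule: less_induct)
    case (less n)
    show ?case
    proof (cases "n \<le> J")
      case True then show ?thesis using d x by blast
    next
      case False
      have inK: "(f^^m) x \<in> K" if "m < n" for m using less[OF that] e1 unfolding K_def by auto
      have "infdist ((f^^(n-1)) x) \<Lambda> < df" using less[of "n-1"] False e1 by auto
      then have "infdist (f ((f^^(n-1)) x)) \<Lambda> < \<epsilon>" using df by blast
      moreover have "f ((f^^(n-1)) x) = (f^^n) x"
      proof -
        obtain m where "n = Suc m" using False by (cases n) auto
        then show ?thesis by simp
      qed
      ultimately have nK: "(f^^n) x \<in> K" unfolding K_def by auto
      have "(f^^n) x \<in> (f^^j) ` K" if "j \<le> J" for j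
      proof (cases "j = 0")
        case True then show ?thesis using nK by simp
      next
        case False
        have "(f^^(n-j)) x \<in> K" using inK False \<open>j \<le> J\<close> \<open>\<not> n \<le> J\<close> by simp
        moreover have "(f^^n) x = (f^^j) ((f^^(n-j)) x)" by (rule funpow_split) (use \<open>j \<le> J\<close> \<open>\<not> n \<le> J\<close> in linarith)
        ultimately show ?thesis by blast
      qed
      then show ?thesis using J by blast
    qed
  qed
  show ?thesis
  proof (intro exI[of _ \<delta>] conjI allI impI)
    fix x n assume "infdist x \<Lambda> < \<delta>"
    then have "infdist ((f^^n) x) \<Lambda> < e1" by (rule main)
    then show "infdist ((f^^n) x) \<Lambda> < \<epsilon>" using e1 by linarith
  qed (rule d(1))
qed

lemma attr:
  assumes "0 < \<epsilon>" "{x. infdist x \<Lambda> \<le> \<epsilon>} \<subseteq> U"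
    and S: "\<forall>x\<in>S. \<forall>n. infdist ((f^^n) x) \<Lambda> < \<epsilon>" and "\<beta> > 0"
  shows "\<exists>N. \<forall>x\<in>S. \<forall>n\<ge>N. infdist ((f^^n) x) \<Lambda> < \<beta>"
proof -
  define K where "K = {x. infdist x \<Lambda> \<le> \<epsilon>}"
  have sub: "(\<Inter>j. (f^^j) ` K) \<subseteq> {x. infdist x \<Lambda> < \<beta>}"
  proof -
    have "(\<Inter>j. (f^^j) ` K) \<subseteq> (\<Inter>j. (f^^j) ` U)" using assms(2) unfolding K_def by blast
    also have "\<dots> = \<Lambda>" by (rule UL)
    also have "\<dots> \<subseteq> {x. infdist x \<Lambda> < \<beta>}" using assms by auto
    finally show ?thesis .
  qed
  obtain J where J: "(\<Inter>j\<in>{..J}. (f^^j) ` K) \<subseteq> {x. infdist x \<Lambda> < \<beta>}"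
    using fin_inter[OF cpt _ sub Bop] closed_img[OF Kcl] unfolding K_def by blast
  have "infdist ((f^^n) x) \<Lambda> < \<beta>" if "x \<in> S" "n \<ge> J" for x n
  proof -
    have "(f^^n) x \<in> (f^^j) ` K" if "j \<le> J" for j
    proof -
      have "(f^^(n-j)) x \<in> K" using S \<open>x \<in> S\<close> unfolding K_def by (simp add: less_imp_le)
      moreover have "(f^^n) x = (f^^j) ((f^^(n-j)) x)" by (rule funpow_split) (use that \<open>n \<ge> J\<close> in linarith)
      ultimately show ?thesis by blast
    qed
    then show ?thesis using J by blast
  qed
  then show ?thesis by blast
qed

lemma FTS: "\<tau> > 0 \<Longrightarrow> \<exists>d1>0. \<forall>d z. d < d1 \<longrightarrow> (\<forall>i<N. dist (z (Suc i)) (f (z i)) \<le> d)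
   \<longrightarrow> (\<forall>j\<le>N. dist (z j) ((f^^j) (z 0)) < \<tau>)"
proof (induction N arbitrary: \<tau>)
  case 0 then show ?case by (intro exI[of _ 1]) auto
next
  case (Suc N)
  obtain df where df: "df > 0" "\<forall>u v. dist u v < df \<longrightarrow> dist (f u) (f v) < \<tau>/2"
    using ucf[of "\<tau>/2"] Suc.prems by auto
  obtain d1 where d1: "d1 > 0" "\<forall>d z. d < d1 \<longrightarrow> (\<forall>i<N. dist (z (Suc i)) (f (z i)) \<le> d)
   \<longrightarrow> (\<forall>j\<le>N. dist (z j) ((f^^j) (z 0)) < min \<tau> df)"
    using Suc.IH[of "min \<tau> df"] Suc.prems df by auto
  show ?case
  proof (intro exI[of _ "min d1 (\<tau>/2)"] conjI allI impI)
    fix d z j assume dd: "d < min d1 (\<tau>/2)" and pz: "\<forall>i<Suc N. dist (z (Suc i)) (f (z i)) \<le> d"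
      and j: "j \<le> Suc N"
    have IH: "\<forall>j\<le>N. dist (z j) ((f^^j) (z 0)) < min \<tau> df" using d1 dd pz by auto
    show "dist (z j) ((f^^j) (z 0)) < \<tau>"
    proof (cases "j = Suc N")
      case True
      have "dist (z (Suc N)) ((f^^Suc N) (z 0)) \<le> dist (z (Suc N)) (f (z N)) + dist (f (z N)) (f ((f^^N) (z 0)))"
        by (simp add: dist_triangle)
      also have "\<dots> < d + \<tau>/2" using pz df IH by (intro add_le_less_mono) auto
      also have "\<dots> < \<tau>" using dd by auto
      finally show ?thesis using True by simp
    next
      case False
      then have "j \<le> N" using j by simp
      then have "dist (z j) ((f^^j) (z 0)) < min \<tau> df" using IH by blast
      then show ?thesis by simp
    qed
  qed (use d1 Suc.prems in auto)
qed

end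


lemma le_of_all_inv:
  fixes a e :: real
  assumes "\<forall>k::nat. a \<le> e + 1 / (real k + 1)"
  shows "a \<le> e"
proof (rule ccontr)
  assume "\<not> a \<le> e"
  then obtain k where "inverse (real (Suc k)) < a - e" using reals_Archimedean[of "a - e"] by auto
  then show False using assms[rule_format, of k] by (simp add: field_simps)
qed

context dyn begin

lemma closed_seg: "closed {x. \<forall>i\<le>N. dist (y i) ((f^^i) x) \<le> e}"
proof -
  have "{x. \<forall>i\<le>N. dist (y i) ((f^^i) x) \<le> e} = (\<Inter>i\<in>{..N}. {x. dist (y i) ((f^^i) x) \<le> e})" by auto
  moreover have "closed {x. dist (y i) ((f^^i) x) \<le> e}" for i
    by (intro closed_Collect_le continuous_on_const continuous_on_dist cfn)
  ultimately show ?thesis by (simp add: closed_INT)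
qed

lemma shadow_fin:
  assumes "\<forall>N. \<exists>x. \<forall>i\<le>N. dist (y i) ((f^^i) x) \<le> e"
  shows "\<exists>x. \<forall>i. dist (y i) ((f^^i) x) \<le> e"
proof -
  have "\<exists>x. \<forall>N. x \<in> {x. \<forall>i\<le>N. dist (y i) ((f^^i) x) \<le> e}"
    by (rule fip_nat[OF cpt closed_seg]) (use assms in auto)
  then show ?thesis by auto
qed

lemma shadow_approx:
  assumes "\<forall>k::nat. \<exists>x. \<forall>i\<le>N. dist (y i) ((f^^i) x) \<le> e + 1 / (real k + 1)"
  shows "\<exists>x. \<forall>i\<le>N. dist (y i) ((f^^i) x) \<le> e"
proof -
  have "\<exists>x. \<forall>k. x \<in> {x. \<forall>i\<le>N. dist (y i) ((f^^i) x) \<le> e + 1 / (real k + 1)}"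
  proof (rule fip_nat[OF cpt closed_seg])
    show "{x. \<forall>i\<le>N. dist (y i) ((f^^i) x) \<le> e + 1 / (real (Suc k) + 1)}
       \<subseteq> {x. \<forall>i\<le>N. dist (y i) ((f^^i) x) \<le> e + 1 / (real k + 1)}" for k
    proof -
      have "1 / (real (Suc k) + 1) \<le> 1 / (real k + 1)" by (simp add: frac_le)
      then show ?thesis by (auto intro: order_trans)
    qed
  qed (use assms in auto)
  then obtain x where "\<forall>k. \<forall>i\<le>N. dist (y i) ((f^^i) x) \<le> e + 1 / (real k + 1)" by auto
  then show ?thesis using le_of_all_inv by blast
qed

definition pch :: "real \<Rightarrow> nat \<Rightarrow> (nat \<Rightarrow> 'a) \<Rightarrow> bool" where
  "pch \<eta> L p \<longleftrightarrow> (\<forall>i<L. dist (p (Suc i)) (f (p i)) < \<eta>)"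

definition glue :: "nat \<Rightarrow> (nat \<Rightarrow> 'a) \<Rightarrow> (nat \<Rightarrow> 'a) \<Rightarrow> nat \<Rightarrow> 'a" where
  "glue L p q = (\<lambda>i. if i \<le> L then p i else q (i - L))"

lemma glue_lo: "i \<le> L \<Longrightarrow> glue L p q i = p i" by (simp add: glue_def)
lemma glue_hi: "p L = q 0 \<Longrightarrow> glue L p q (L + i) = q i" by (simp add: glue_def)

lemma pch_glue:
  assumes "pch \<eta> L p" "pch \<eta> L' q" "p L = q 0"
  shows "pch \<eta> (L + L') (glue L p q)"
  unfolding pch_def
proof (intro allI impI)
  fix i assume i: "i < L + L'"
  show "dist (glue L p q (Suc i)) (f (glue L p q i)) < \<eta>"
  proof (cases "Suc i \<le> L")
    case True then show ?thesis using assms(1) by (simp add: glue_def pch_def)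
  next
    case False
    then have "i - L < L'" "Suc i - L = Suc (i - L)" using i by auto
    moreover have "glue L p q i = q (i - L)" using False assms(3) by (cases "i = L") (auto simp: glue_def)
    moreover have "glue L p q (Suc i) = q (Suc (i - L))" using False by (auto simp: glue_def Suc_diff_le)
    ultimately show ?thesis using assms(2) by (simp add: pch_def)
  qed
qed

definition rch :: "real \<Rightarrow> 'a \<Rightarrow> 'a \<Rightarrow> bool" where
  "rch \<eta> u v \<longleftrightarrow> (\<exists>L p. p 0 = u \<and> p L = v \<and> pch \<eta> L p)"

lemma rch_trans: "rch \<eta> u v \<Longrightarrow> rch \<eta> v w \<Longrightarrow> rch \<eta> u w"
proof -
  assume "rch \<eta> u v" "rch \<eta> v w"
  then obtain L p L' q where p: "p 0 = u" "p L = v" "pch \<eta> L p" and q: "q 0 = v" "q L' = w" "pch \<eta> L' q"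
    unfolding rch_def by blast
  have "glue L p q 0 = u" using p by (simp add: glue_def)
  moreover have "glue L p q (L + L') = w" using glue_hi[of p L q L'] p q by simp
  moreover have "pch \<eta> (L + L') (glue L p q)" using pch_glue p q by simp
  ultimately show ?thesis unfolding rch_def by blast
qed

lemma pch_orbit: "\<eta> > 0 \<Longrightarrow> pch \<eta> L (\<lambda>i. (f^^i) u)"
  by (simp add: pch_def)

lemma rch_orbit: "\<eta> > 0 \<Longrightarrow> rch \<eta> u ((f^^n) u)"
  unfolding rch_def using pch_orbit by (intro exI[of _ n] exI[of _ "\<lambda>i. (f^^i) u"]) auto

lemma rch_jump: "dist v (f u) < \<eta> \<Longrightarrow> rch \<eta> u v"
  unfolding rch_def pch_def by (intro exI[of _ 1] exI[of _ "\<lambda>i. if i = 0 then u else v"]) auto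

lemma r_ex: obtains r where "r \<in> \<Lambda>" "\<Lambda> = closure (range (\<lambda>n. (f ^^ n) r))"
  using tr unfolding transitive_set_def by blast

lemma omega_all:
  assumes "\<Lambda> = closure (range (\<lambda>n. (f ^^ n) r))"
  shows "\<Lambda> \<subseteq> closure {(f^^j) r | j. N \<le> j}"
proof (induction N)
  case 0 then show ?case using assms by (simp add: full_SetCompr_eq)
next
  case (Suc N)
  have "f ` closure {(f^^j) r | j. N \<le> j} \<subseteq> closure {(f^^j) r | j. Suc N \<le> j}"
  proof (rule image_closure_subset)
    show "continuous_on (closure {(f^^j) r | j. N \<le> j}) f" using cf continuous_on_subset by blast
    show "f ` {(f^^j) r | j. N \<le> j} \<subseteq> closure {(f^^j) r | j. Suc N \<le> j}"
    proof
      fix y assume "y \<in> f ` {(f^^j) r | j. N \<le> j}"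
      then obtain j where "N \<le> j" "y = f ((f^^j) r)" by blast
      then have "y = (f^^(Suc j)) r" "Suc N \<le> Suc j" by auto
      then show "y \<in> closure {(f^^j) r | j. Suc N \<le> j}" by (intro closure_subset[THEN subsetD]) blast
    qed
  qed simp
  moreover have "\<Lambda> = f ` \<Lambda>" using fL by simp
  ultimately show ?case using Suc by blast
qed

lemma rch_Lam:
  assumes "a \<in> \<Lambda>" "w \<in> \<Lambda>" "\<eta> > 0"
  shows "rch \<eta> a w"
proof -
  obtain r where r: "r \<in> \<Lambda>" "\<Lambda> = closure (range (\<lambda>n. (f ^^ n) r))" by (rule r_ex)
  have "f a \<in> \<Lambda>" using assms fL by blast
  then have "\<exists>y\<in>range (\<lambda>n. (f ^^ n) r). dist y (f a) < \<eta>"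
    using r(2) assms(3) closure_approachable by blast
  then obtain k where k: "dist ((f^^k) r) (f a) < \<eta>" by blast
  have "w \<in> closure {(f^^j) r | j. Suc k \<le> j}" using omega_all[OF r(2)] assms by blast
  then obtain j where j: "Suc k \<le> j" "dist ((f^^j) r) w < \<eta>"
    using assms(3) unfolding closure_approachable by blast
  have 1: "rch \<eta> a ((f^^k) r)" by (rule rch_jump[OF k])
  have 2: "rch \<eta> ((f^^k) r) ((f^^(j-1)) r)"
  proof -
    have "(f^^(j-1-k)) ((f^^k) r) = (f^^(j-1-k+k)) r" by (simp add: funpow_add)
    moreover have "j-1-k+k = j-1" using j(1) by simp
    ultimately have "(f^^(j-1)) r = (f^^(j-1-k)) ((f^^k) r)" by simp
    then show ?thesis using rch_orbit[OF assms(3)] by simp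
  qed
  have 3: "rch \<eta> ((f^^(j-1)) r) w"
  proof (rule rch_jump)
    obtain m where "j = Suc m" using j(1) by (cases j) auto
    then have "f ((f^^(j-1)) r) = (f^^j) r" by simp
    then show "dist w (f ((f^^(j-1)) r)) < \<eta>" using j(2) by (simp add: dist_commute)
  qed
  show ?thesis using rch_trans[OF rch_trans[OF 1 2] 3] .
qed

lemma rch_pt:
  assumes "infdist ((f^^(Suc m)) z) \<Lambda> < \<eta>" "w \<in> \<Lambda>" "\<eta> > 0"
  shows "rch \<eta> z w"
proof -
  obtain a where a: "a \<in> \<Lambda>" "dist ((f^^(Suc m)) z) a < \<eta>" by (rule infdist_lessE[OF assms(1) Lne])
  have "rch \<eta> z ((f^^m) z)" by (rule rch_orbit[OF assms(3)])
  moreover have "rch \<eta> ((f^^m) z) a" by (rule rch_jump) (use a in \<open>simp add: dist_commute\<close>)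
  moreover have "rch \<eta> a w" by (rule rch_Lam[OF a(1) assms(2,3)])
  ultimately show ?thesis using rch_trans by blast
qed

lemma bad_pattern:
  assumes "\<not> shadowing_on f \<Lambda>"
  shows "\<exists>eps1>0. \<forall>d>0. \<exists>w N. w 0 \<in> \<Lambda> \<and> (\<forall>i<N. dist (w (Suc i)) (f (w i)) \<le> d)
           \<and> \<not> (\<exists>x. \<forall>i\<le>N. dist (w i) ((f^^i) x) \<le> eps1)"
proof -
  obtain eps where eps: "eps > 0" "\<forall>d>0. \<exists>y. (\<forall>n. y n \<in> \<Lambda>) \<and> is_pseudotrajectory f d y \<and> \<not> shadowed f eps y"
    using assms unfolding shadowing_on_def by blast
  show ?thesis
  proof (intro exI[of _ eps] conjI allI impI)
    fix d :: real assume "d > 0"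
    then obtain y where y: "\<forall>n. y n \<in> \<Lambda>" "is_pseudotrajectory f d y" "\<not> shadowed f eps y" using eps by blast
    have "\<exists>N. \<not> (\<exists>x. \<forall>i\<le>N. dist (y i) ((f^^i) x) \<le> eps)"
    proof (rule ccontr)
      assume "\<not> ?thesis"
      then have "\<forall>N. \<exists>x. \<forall>i\<le>N. dist (y i) ((f^^i) x) \<le> eps" by blast
      then have "shadowed f eps y" unfolding shadowed_def by (rule shadow_fin)
      then show False using y(3) by blast
    qed
    then show "\<exists>w N. w 0 \<in> \<Lambda> \<and> (\<forall>i<N. dist (w (Suc i)) (f (w i)) \<le> d) \<and> \<not> (\<exists>x. \<forall>i\<le>N. dist (w i) ((f^^i) x) \<le> eps)"
      using y unfolding is_pseudotrajectory_def by blast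
  qed (rule eps(1))
qed

end


context dyn begin

lemma trap:
  assumes y0: "y0 \<in> domain_of_attraction f \<Lambda>"
  shows "\<exists>Q n0 d0. compact Q \<and> d0 > 0 \<and>
     (\<forall>d z. d < d0 \<longrightarrow> z 0 = y0 \<longrightarrow> (\<forall>i. dist (z (Suc i)) (f (z i)) \<le> d) \<longrightarrow> (\<forall>n\<ge>n0. z n \<in> Q)) \<and>
     (\<forall>\<beta>>0. \<exists>N. \<forall>x\<in>Q. \<forall>n\<ge>N. infdist ((f^^n) x) \<Lambda> < \<beta>)"
proof -
  obtain e0 where e0: "e0 > 0" "{x. infdist x \<Lambda> \<le> e0} \<subseteq> U" using nbhd[OF Uop LU] by blast
  obtain dA where dA: "dA > 0" "\<forall>x. infdist x \<Lambda> < dA \<longrightarrow> (\<forall>n. infdist ((f^^n) x) \<Lambda> < e0)"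
    using lyap[OF e0] by blast
  define Q where "Q = {x. infdist x \<Lambda> \<le> dA/2}"
  have "closed Q" unfolding Q_def by (rule Kcl)
  then have cQ: "compact Q" using compact_Int_closed[OF cpt] by simp
  have Qorb: "\<forall>x\<in>Q. \<forall>n. infdist ((f^^n) x) \<Lambda> < e0" using dA unfolding Q_def by auto
  have attrQ: "\<forall>\<beta>>0. \<exists>N. \<forall>x\<in>Q. \<forall>n\<ge>N. infdist ((f^^n) x) \<Lambda> < \<beta>"
    using attr[OF e0 Qorb] by blast
  define e2 where "e2 = min (dA/4) e0"
  have e2: "e2 > 0" "{x. infdist x \<Lambda> \<le> e2} \<subseteq> U" using e0 dA unfolding e2_def by auto
  obtain d2 where d2: "d2 > 0" "\<forall>x. infdist x \<Lambda> < d2 \<longrightarrow> (\<forall>n. infdist ((f^^n) x) \<Lambda> < e2)"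
    using lyap[OF e2] by blast
  define \<theta> where "\<theta> = min d2 (dA/2)"
  have th: "\<theta> > 0" "\<theta> \<le> d2" "\<theta> \<le> dA/2" using d2 dA unfolding \<theta>_def by auto
  have "\<theta>/2 > 0" using th by simp
  then obtain N0 where N0: "\<forall>x\<in>Q. \<forall>n\<ge>N0. infdist ((f^^n) x) \<Lambda> < \<theta>/2" using attrQ by blast
  define N where "N = Suc N0"
  define \<tau> where "\<tau> = min (\<theta>/2) (dA/4)"
  have tau: "\<tau> > 0" "\<tau> \<le> \<theta>/2" "\<tau> \<le> dA/4" using th dA unfolding \<tau>_def by auto
  obtain d1 where d1: "d1 > 0" "\<forall>d z. d < d1 \<longrightarrow> (\<forall>i<N. dist (z (Suc i)) (f (z i)) \<le> d)
   \<longrightarrow> (\<forall>j\<le>N. dist (z j) ((f^^j) (z 0)) < \<tau>)" using FTS[OF tau(1)] by blast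
  have "(\<lambda>n. infdist ((f ^^ n) y0) \<Lambda>) \<longlonglongrightarrow> 0" using y0 unfolding domain_of_attraction_def by simp
  then have "\<forall>\<^sub>F n in sequentially. infdist ((f ^^ n) y0) \<Lambda> < \<theta>/2"
    using th(1) by (intro order_tendstoD(2)) auto
  then obtain n0 where n0: "infdist ((f ^^ n0) y0) \<Lambda> < \<theta>/2" by (meson eventually_sequentially order.refl)
  obtain d3 where d3: "d3 > 0" "\<forall>d z. d < d3 \<longrightarrow> (\<forall>i<n0. dist (z (Suc i)) (f (z i)) \<le> d)
   \<longrightarrow> (\<forall>j\<le>n0. dist (z j) ((f^^j) (z 0)) < \<theta>/2)" using FTS[of "\<theta>/2" n0] th by auto
  define d0 where "d0 = min d1 d3"
  have trapz: "\<forall>n\<ge>n0. z n \<in> Q" if d: "d < d0" and z0: "z 0 = y0" and pz: "\<forall>i. dist (z (Suc i)) (f (z i)) \<le> d" for d z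
  proof -
    have "dist (z n0) ((f^^n0) (z 0)) < \<theta>/2" using d3 d pz unfolding d0_def by auto
    then have start: "infdist (z n0) \<Lambda> < \<theta>"
      using infdist_triangle[of "z n0" \<Lambda> "(f^^n0) y0"] n0 z0 by simp
    have block: "(\<forall>j\<le>N. z (m+j) \<in> Q) \<and> infdist (z (m+N)) \<Lambda> < \<theta>" if m: "infdist (z m) \<Lambda> < \<theta>" for m
    proof -
      have cl: "\<forall>j\<le>N. dist (z (m+j)) ((f^^j) (z m)) < \<tau>"
        using d1(2)[rule_format, of d "\<lambda>i. z (m+i)"] d pz unfolding d0_def by simp
      have A: "z (m+j) \<in> Q" if j: "j \<le> N" for j
      proof -
        have "infdist ((f^^j) (z m)) \<Lambda> < e2" using d2 m th by auto
        then have "infdist ((f^^j) (z m)) \<Lambda> < dA/4" unfolding e2_def by simp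
        moreover have "dist (z (m+j)) ((f^^j) (z m)) < \<tau>" using cl j by blast
        then have "dist (z (m+j)) ((f^^j) (z m)) < dA/4" using tau by linarith
        ultimately show ?thesis using infdist_triangle[of "z (m+j)" \<Lambda> "(f^^j) (z m)"] unfolding Q_def by simp
      qed
      have "z m \<in> Q" using m th unfolding Q_def by simp
      then have "infdist ((f^^N) (z m)) \<Lambda> < \<theta>/2" using N0 unfolding N_def by (meson le_Suc_eq order.refl)
      moreover have "dist (z (m+N)) ((f^^N) (z m)) < \<tau>" using cl by blast
      then have "dist (z (m+N)) ((f^^N) (z m)) < \<theta>/2" using tau by linarith
      ultimately have "infdist (z (m+N)) \<Lambda> < \<theta>" using infdist_triangle[of "z (m+N)" \<Lambda> "(f^^N) (z m)"] by simp
      then show ?thesis using A by blast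
    qed
    have ind: "infdist (z (n0 + k*N)) \<Lambda> < \<theta>" for k
    proof (induction k)
      case 0 then show ?case using start by simp
    next
      case (Suc k)
      have "n0 + Suc k * N = (n0 + k*N) + N" by simp
      then show ?case using block[OF Suc] by (simp add: add.assoc add.commute add.left_commute)
    qed
    show ?thesis
    proof (intro allI impI)
      fix n assume "n0 \<le> n"
      define k where "k = (n - n0) div N"
      define j where "j = (n - n0) mod N"
      have "n = (n0 + k*N) + j" unfolding k_def j_def using \<open>n0 \<le> n\<close> by simp
      moreover have "j \<le> N" unfolding j_def N_def by (meson mod_less_divisor zero_less_Suc less_imp_le)
      ultimately show "z n \<in> Q" using block[OF ind[of k]] by simp
    qed
  qed
  show ?thesis
    apply (rule exI[of _ Q], rule exI[of _ n0], rule exI[of _ d0])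
    using cQ d1 d3 trapz attrQ unfolding d0_def by auto
qed

lemma rob:
  assumes "\<eta> < d"
  shows "\<exists>\<rho>>0. \<forall>u v x w. dist v (f u) < \<eta> \<longrightarrow> dist x u < \<rho> \<longrightarrow> dist w v < \<rho> \<longrightarrow> dist w (f x) < d"
proof -
  obtain \<delta> where dl: "\<delta> > 0" "\<forall>u v. dist u v < \<delta> \<longrightarrow> dist (f u) (f v) < (d-\<eta>)/2"
    using ucf[of "(d-\<eta>)/2"] assms by auto
  define \<rho> where "\<rho> = min \<delta> ((d-\<eta>)/2)"
  have "dist w (f x) < d" if "dist v (f u) < \<eta>" "dist x u < \<rho>" "dist w v < \<rho>" for u v x w
  proof -
    have "dist (f x) (f u) < (d-\<eta>)/2" using dl that unfolding \<rho>_def by auto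
    moreover have "dist w (f x) \<le> dist w v + dist v (f u) + dist (f u) (f x)"
      using dist_triangle[of w "f x" v] dist_triangle[of v "f x" "f u"] by linarith
    ultimately show ?thesis using that unfolding \<rho>_def by (simp add: dist_commute)
  qed
  moreover have "\<rho> > 0" unfolding \<rho>_def using dl assms by simp
  ultimately show ?thesis by blast
qed

lemma tube_ext:
  assumes "pch \<eta> L p" "L \<le> L'" "\<eta> > 0"
  shows "\<exists>p'. pch \<eta> L' p' \<and> (\<forall>i\<le>L. p' i = p i)"
proof -
  define q where "q = (\<lambda>i. (f^^i) (p L))"
  have "pch \<eta> (L + (L' - L)) (glue L p q)" using pch_glue[OF assms(1) pch_orbit[OF assms(3)]] unfolding q_def by simp
  then show ?thesis using assms(2) by (intro exI[of _ "glue L p q"]) (auto simp: glue_lo)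
qed

lemma tube_exists:
  assumes "rch \<eta> z (w 0)" "\<forall>i<N. dist (w (Suc i)) (f (w i)) < \<eta>" "\<eta> > 0"
  shows "\<exists>L0. \<forall>L\<ge>L0. \<exists>p s. p 0 = z \<and> pch \<eta> L p \<and> s + N \<le> L \<and> (\<forall>i\<le>N. p (s+i) = w i)"
proof -
  obtain L1 p1 where p1: "p1 0 = z" "p1 L1 = w 0" "pch \<eta> L1 p1" using assms(1) unfolding rch_def by blast
  have pw: "pch \<eta> N w" using assms(2) unfolding pch_def by blast
  define p2 where "p2 = glue L1 p1 w"
  have p2: "pch \<eta> (L1 + N) p2" unfolding p2_def by (rule pch_glue[OF p1(3) pw p1(2)])
  have p20: "p2 0 = z" using p1 unfolding p2_def by (simp add: glue_def)
  have p2w: "\<forall>i\<le>N. p2 (L1 + i) = w i" unfolding p2_def using glue_hi[of p1 L1 w] p1 by simp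
  show ?thesis
  proof (intro exI[of _ "L1 + N"] allI impI)
    fix L assume L: "L1 + N \<le> L"
    obtain p where p: "pch \<eta> L p" "\<forall>i\<le>L1 + N. p i = p2 i" using tube_ext[OF p2 L assms(3)] by blast
    show "\<exists>p s. p 0 = z \<and> pch \<eta> L p \<and> s + N \<le> L \<and> (\<forall>i\<le>N. p (s+i) = w i)"
      apply (rule exI[of _ p], rule exI[of _ L1])
      using p p20 p2w L by auto
  qed
qed

end


definition dep :: "nat \<Rightarrow> ((nat \<Rightarrow> 'a) \<Rightarrow> bool) \<Rightarrow> bool" where
  "dep n \<Phi> \<longleftrightarrow> (\<forall>y y'. (\<forall>i\<le>n. y i = y' i) \<longrightarrow> \<Phi> y = \<Phi> y')"

abbreviation mpred :: "nat \<Rightarrow> ((nat \<Rightarrow> 'a::topological_space) \<Rightarrow> bool) \<Rightarrow> bool" where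
  "mpred n \<Phi> \<equiv> Measurable.pred (Pi\<^sub>M {..n} (\<lambda>_. borel)) \<Phi>"

lemma dep_mono: "dep n \<Phi> \<Longrightarrow> n \<le> m \<Longrightarrow> dep m \<Phi>"
  unfolding dep_def by (meson order_trans)

lemma dep_restrict: "dep n \<Phi> \<Longrightarrow> n \<le> m \<Longrightarrow> \<Phi> (restrict y {..m}) = \<Phi> y"
  unfolding dep_def by auto

lemma mpred_mono:
  fixes \<Phi> :: "(nat \<Rightarrow> 'a::topological_space) \<Rightarrow> bool"
  assumes "dep n \<Phi>" "mpred n \<Phi>" "n \<le> m"
  shows "mpred m \<Phi>"
proof -
  have C: "{x\<in>space (Pi\<^sub>M {..n} (\<lambda>_. borel)). \<Phi> x} \<in> sets (Pi\<^sub>M {..n} (\<lambda>_. (borel::'a measure)))"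
    using assms(2) by (simp add: pred_def)
  have "(\<lambda>x. restrict x {..n}) -` {x\<in>space (Pi\<^sub>M {..n} (\<lambda>_. borel)). \<Phi> x} \<inter> space (Pi\<^sub>M {..m} (\<lambda>_. borel))
     \<in> sets (Pi\<^sub>M {..m} (\<lambda>_. (borel::'a measure)))"
    by (rule measurable_sets[OF measurable_restrict_subset C]) (use assms(3) in auto)
  moreover have "(\<lambda>x. restrict x {..n}) -` {x\<in>space (Pi\<^sub>M {..n} (\<lambda>_. borel)). \<Phi> x} \<inter> space (Pi\<^sub>M {..m} (\<lambda>_. (borel::'a measure)))
     = {x\<in>space (Pi\<^sub>M {..m} (\<lambda>_. borel)). \<Phi> x}"
    using dep_restrict[OF assms(1) order_refl] by (auto simp: space_PiM)
  ultimately show ?thesis by (simp add: pred_def)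
qed

lemma mpred_comp:
  fixes B :: "'a::topological_space set"
  assumes "k \<le> m" "B \<in> sets borel"
  shows "mpred m (\<lambda>x. x k \<in> B)"
proof -
  have "(\<lambda>x. x k) \<in> measurable (Pi\<^sub>M {..m} (\<lambda>_. (borel::'a measure))) borel"
    using measurable_component_singleton[of k "{..m}" "\<lambda>_. borel"] assms(1) by simp
  from measurable_sets[OF this assms(2)] show ?thesis
    by (simp add: pred_def Int_def conj_commute vimage_def)
qed

lemma mpred_True: "mpred m (\<lambda>x. True)"
  unfolding pred_def by simp

lemma mpred_False: "mpred m (\<lambda>x. False)"
  unfolding pred_def by simp

lemma mpred_all_le:
  fixes L :: nat
  assumes "\<And>i. i \<le> L \<Longrightarrow> mpred m (P i)"
  shows "mpred m (\<lambda>x. \<forall>i\<le>L. P i x)"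
  using assms
proof (induction L)
  case 0
  have eq: "(\<lambda>x. \<forall>i\<le>(0::nat). P i x) = P 0" by (auto simp: fun_eq_iff)
  show ?case unfolding eq by (rule 0) simp
next
  case (Suc L)
  have eq: "(\<lambda>x. \<forall>i\<le>Suc L. P i x) = (\<lambda>x. (\<forall>i\<le>L. P i x) \<and> P (Suc L) x)"
    by (auto simp: le_Suc_eq fun_eq_iff)
  have a: "mpred m (\<lambda>x. \<forall>i\<le>L. P i x)" by (rule Suc.IH) (rule Suc.prems, simp)
  have b: "mpred m (P (Suc L))" by (rule Suc.prems) simp
  show ?case unfolding eq by (rule pred_intros_logic(3)[OF a b])
qed

lemma mpred_ex_le:
  fixes L :: nat
  assumes "\<And>i. i \<le> L \<Longrightarrow> mpred m (P i)"
  shows "mpred m (\<lambda>x. \<exists>i\<le>L. P i x)"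
  using assms
proof (induction L)
  case 0
  have eq: "(\<lambda>x. \<exists>i\<le>(0::nat). P i x) = P 0" by (auto simp: fun_eq_iff)
  show ?case unfolding eq by (rule 0) simp
next
  case (Suc L)
  have eq: "(\<lambda>x. \<exists>i\<le>Suc L. P i x) = (\<lambda>x. (\<exists>i\<le>L. P i x) \<or> P (Suc L) x)"
    by (auto simp: le_Suc_eq fun_eq_iff)
  have a: "mpred m (\<lambda>x. \<exists>i\<le>L. P i x)" by (rule Suc.IH) (rule Suc.prems, simp)
  have b: "mpred m (P (Suc L))" by (rule Suc.prems) simp
  show ?case unfolding eq by (rule pred_intros_logic(5)[OF a b])
qed

lemma mpred_all_less:
  fixes L :: nat
  assumes "\<And>i. i < L \<Longrightarrow> mpred m (P i)"
  shows "mpred m (\<lambda>x. \<forall>i<L. P i x)"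
proof (cases L)
  case 0 then show ?thesis by (simp add: mpred_True)
next
  case (Suc L')
  have eq: "(\<lambda>x. \<forall>i<L. P i x) = (\<lambda>x. \<forall>i\<le>L'. P i x)" using Suc by (auto simp: fun_eq_iff less_Suc_eq_le)
  show ?thesis unfolding eq by (rule mpred_all_le, rule assms) (use Suc in simp)
qed

lemma mpred_ex_less:
  fixes L :: nat
  assumes "\<And>i. i < L \<Longrightarrow> mpred m (P i)"
  shows "mpred m (\<lambda>x. \<exists>i<L. P i x)"
proof (cases L)
  case 0 then show ?thesis by (simp add: mpred_False)
next
  case (Suc L')
  have eq: "(\<lambda>x. \<exists>i<L. P i x) = (\<lambda>x. \<exists>i\<le>L'. P i x)" using Suc by (auto simp: fun_eq_iff less_Suc_eq_le)
  show ?thesis unfolding eq by (rule mpred_ex_le, rule assms) (use Suc in simp)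
qed

locale mk =
  fixes \<mu> :: "'a::metric_space measure" and f :: "'a \<Rightarrow> 'a" and y0 :: 'a and d :: real
    and P :: "(nat \<Rightarrow> 'a) measure"
  assumes law: "random_pt_law \<mu> f y0 d P"
begin

lemma ps: "prob_space P" using law by (simp add: random_pt_law_def)
lemma sP: "sets P = sets (Pi\<^sub>M UNIV (\<lambda>_. borel))" using law by (simp add: random_pt_law_def)
lemma spP: "space P = UNIV"
  using sets_eq_imp_space_eq[OF sP] by (simp add: space_PiM)

lemma markov: "C \<in> sets (Pi\<^sub>M {..n} (\<lambda>_. borel)) \<Longrightarrow> A \<in> sets borel \<Longrightarrow>
        emeasure P {y. restrict y {..n} \<in> C \<and> y (Suc n) \<in> A}
          = (\<integral>\<^sup>+ y. indicator {y. restrict y {..n} \<in> C} y * ennreal (trans_prob \<mu> f d (y n) A) \<partial>P)"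
  using law by (simp add: random_pt_law_def)

lemma ev_sets:
  assumes "dep n \<Phi>" "mpred n \<Phi>"
  shows "{y. \<Phi> y} \<in> sets P"
proof -
  have C: "{x\<in>space (Pi\<^sub>M {..n} (\<lambda>_. borel)). \<Phi> x} \<in> sets (Pi\<^sub>M {..n} (\<lambda>_. (borel::'a measure)))"
    using assms(2) by (simp add: pred_def)
  have "(\<lambda>x. restrict x {..n}) -` {x\<in>space (Pi\<^sub>M {..n} (\<lambda>_. borel)). \<Phi> x} \<inter> space (Pi\<^sub>M UNIV (\<lambda>_. borel))
     \<in> sets (Pi\<^sub>M UNIV (\<lambda>_. (borel::'a measure)))"
    by (rule measurable_sets[OF measurable_restrict_subset C]) auto
  moreover have "(\<lambda>x. restrict x {..n}) -` {x\<in>space (Pi\<^sub>M {..n} (\<lambda>_. borel)). \<Phi> x} \<inter> space (Pi\<^sub>M UNIV (\<lambda>_. (borel::'a measure)))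
     = {y. \<Phi> y}"
    using dep_restrict[OF assms(1) order_refl] by (auto simp: space_PiM)
  ultimately show ?thesis using sP by simp
qed

lemma one_step:
  assumes "dep n \<Phi>" "mpred n \<Phi>" "A \<in> sets borel" "0 \<le> a"
    and lb: "\<And>y. \<Phi> y \<Longrightarrow> a \<le> trans_prob \<mu> f d (y n) A"
  shows "a * measure P {y. \<Phi> y} \<le> measure P {y. \<Phi> y \<and> y (Suc n) \<in> A}"
proof -
  interpret prob_space P by (rule ps)
  define C where "C = {x\<in>space (Pi\<^sub>M {..n} (\<lambda>_. borel)). \<Phi> x}"
  have C: "C \<in> sets (Pi\<^sub>M {..n} (\<lambda>_. (borel::'a measure)))"
    using assms(2) by (simp add: pred_def C_def)
  have eqC: "{y. restrict y {..n} \<in> C} = {y. \<Phi> y}"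
    using dep_restrict[OF assms(1) order_refl] by (auto simp: C_def space_PiM)
  have Ps: "{y. \<Phi> y} \<in> sets P" by (rule ev_sets[OF assms(1,2)])
  have "ennreal a * emeasure P {y. \<Phi> y} = (\<integral>\<^sup>+ y. ennreal a * indicator {y. \<Phi> y} y \<partial>P)"
    by (rule nn_integral_cmult_indicator[OF Ps, symmetric])
  also have "\<dots> \<le> (\<integral>\<^sup>+ y. indicator {y. \<Phi> y} y * ennreal (trans_prob \<mu> f d (y n) A) \<partial>P)"
  proof (rule nn_integral_mono)
    fix y show "ennreal a * indicator {y. \<Phi> y} y \<le> indicator {y. \<Phi> y} y * ennreal (trans_prob \<mu> f d (y n) A)"
      using lb[of y] by (auto simp: indicator_def ennreal_leI)
  qed
  also have "\<dots> = emeasure P {y. restrict y {..n} \<in> C \<and> y (Suc n) \<in> A}"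
    using markov[OF C assms(3)] eqC by simp
  also have "{y. restrict y {..n} \<in> C \<and> y (Suc n) \<in> A} = {y. \<Phi> y \<and> y (Suc n) \<in> A}"
    using eqC by blast
  finally have "ennreal a * ennreal (measure P {y. \<Phi> y}) \<le> ennreal (measure P {y. \<Phi> y \<and> y (Suc n) \<in> A})"
    by (simp add: emeasure_eq_measure)
  then show ?thesis using assms(4) by (simp add: ennreal_mult[symmetric])
qed

lemma tube_lb:
  assumes "dep t \<Phi>" "mpred t \<Phi>" "\<And>i. B i \<in> sets borel" "0 \<le> a"
    and tr: "\<And>i x. i < L \<Longrightarrow> x \<in> B i \<Longrightarrow> a \<le> trans_prob \<mu> f d x (B (Suc i))"
  shows "a ^ L * measure P {y. \<Phi> y \<and> y t \<in> B 0} \<le> measure P {y. \<Phi> y \<and> (\<forall>i\<le>L. y (t+i) \<in> B i)}"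
  using tr
proof (induction L)
  case 0 then show ?case by simp
next
  case (Suc L)
  define \<Psi> where "\<Psi> y = (\<Phi> y \<and> (\<forall>i\<le>L. y (t+i) \<in> B i))" for y
  have dP: "dep (t+L) \<Psi>" unfolding dep_def
  proof (intro allI impI)
    fix y y' :: "nat \<Rightarrow> 'a" assume h: "\<forall>i\<le>t+L. y i = y' i"
    have "\<Phi> y = \<Phi> y'" using assms(1) h unfolding dep_def by simp
    moreover have "\<forall>i\<le>L. y (t+i) = y' (t+i)" using h by simp
    ultimately show "\<Psi> y = \<Psi> y'" unfolding \<Psi>_def by simp
  qed
  have m1: "mpred (t+L) \<Phi>" by (rule mpred_mono[OF assms(1,2)]) simp
  have m2: "mpred (t+L) (\<lambda>y. \<forall>i\<le>L. y (t+i) \<in> B i)"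
    by (rule mpred_all_le, rule mpred_comp) (simp_all add: assms(3))
  have mP: "mpred (t+L) \<Psi>" unfolding \<Psi>_def by (rule pred_intros_logic(3)[OF m1 m2])
  have IH: "a ^ L * measure P {y. \<Phi> y \<and> y t \<in> B 0} \<le> measure P {y. \<Psi> y}"
    using Suc.IH Suc.prems unfolding \<Psi>_def by simp
  have st: "a * measure P {y. \<Psi> y} \<le> measure P {y. \<Psi> y \<and> y (Suc (t+L)) \<in> B (Suc L)}"
    by (rule one_step[OF dP mP assms(3) assms(4)]) (use Suc.prems in \<open>auto simp: \<Psi>_def\<close>)
  have eq: "{y. \<Psi> y \<and> y (Suc (t+L)) \<in> B (Suc L)} = {y. \<Phi> y \<and> (\<forall>i\<le>Suc L. y (t+i) \<in> B i)}"
    unfolding \<Psi>_def by (auto simp: le_Suc_eq)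
  have "a ^ Suc L * measure P {y. \<Phi> y \<and> y t \<in> B 0} = a * (a ^ L * measure P {y. \<Phi> y \<and> y t \<in> B 0})" by simp
  also have "\<dots> \<le> a * measure P {y. \<Psi> y}" using IH assms(4) by (rule mult_left_mono)
  also have "\<dots> \<le> measure P {y. \<Phi> y \<and> (\<forall>i\<le>Suc L. y (t+i) \<in> B i)}" using st eq by simp
  finally show ?case .
qed

end


lemma dep_comp: "k \<le> n \<Longrightarrow> dep n (\<lambda>y. y k \<in> B)" unfolding dep_def by auto
lemma dep_conj: "dep n A \<Longrightarrow> dep n B \<Longrightarrow> dep n (\<lambda>y. A y \<and> B y)" unfolding dep_def by metis
lemma dep_not: "dep n A \<Longrightarrow> dep n (\<lambda>y. \<not> A y)" unfolding dep_def by metis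
lemma dep_all_le: "(\<And>i. i \<le> (L::nat) \<Longrightarrow> dep n (P i)) \<Longrightarrow> dep n (\<lambda>y. \<forall>i\<le>L. P i y)"
  unfolding dep_def by (metis (no_types, lifting))
lemma dep_all_less: "(\<And>i. i < (L::nat) \<Longrightarrow> dep n (P i)) \<Longrightarrow> dep n (\<lambda>y. \<forall>i<L. P i y)"
  unfolding dep_def by (metis (no_types, lifting))
lemma dep_ex_less: "(\<And>i. i < (L::nat) \<Longrightarrow> dep n (P i)) \<Longrightarrow> dep n (\<lambda>y. \<exists>i<L. P i y)"
  unfolding dep_def by (metis (no_types, lifting))

context mk begin

lemma tp_lb:
  assumes sm: "sets \<mu> = sets borel" and fm: "finite_measure \<mu>"
    and pos: "\<And>U. open U \<Longrightarrow> U \<noteq> {} \<Longrightarrow> emeasure \<mu> U > 0"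
    and sub: "ball c \<rho> \<subseteq> ball (f x) d" and d: "d > 0"
  shows "measure \<mu> (ball c \<rho>) / measure \<mu> UNIV \<le> trans_prob \<mu> f d x (ball c \<rho>)"
proof -
  interpret finite_measure \<mu> by (rule fm)
  have sp: "space \<mu> = UNIV" using sets_eq_imp_space_eq[OF sm] by simp
  have "emeasure \<mu> (ball (f x) d) > 0" using pos[of "ball (f x) d"] d by simp
  then have pb: "measure \<mu> (ball (f x) d) > 0" by (simp add: emeasure_eq_measure)
  have "measure \<mu> (ball (f x) d) \<le> measure \<mu> UNIV"
    by (rule finite_measure_mono) (simp_all add: sm sp)
  moreover have "ball c \<rho> \<inter> ball (f x) d = ball c \<rho>" using sub by blast
  ultimately show ?thesis unfolding trans_prob_def using pb
    by (simp add: frac_le)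
qed

lemma block_lb:
  fixes D :: "nat \<Rightarrow> 'a set" and T :: "nat \<Rightarrow> nat \<Rightarrow> 'a"
  assumes dP: "dep t \<Phi>" and mP: "mpred t \<Phi>" and Qb: "Q \<in> sets borel"
    and Db: "\<And>q. q < K \<Longrightarrow> D q \<in> sets borel" and disj: "disjoint_family_on D {..<K}"
    and DQ: "(\<Union>q<K. D q) = Q" and Dball: "\<And>q. q < K \<Longrightarrow> D q \<subseteq> ball (T q 0) \<rho>"
    and a0: "0 \<le> a"
    and tr: "\<And>q i x. q < K \<Longrightarrow> i < L \<Longrightarrow> x \<in> ball (T q i) \<rho> \<Longrightarrow> a \<le> trans_prob \<mu> f d x (ball (T q (Suc i)) \<rho>)"
  shows "a ^ L * measure P {y. \<Phi> y \<and> y t \<in> Q}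
     \<le> measure P {y. \<Phi> y \<and> y t \<in> Q \<and> (\<exists>q<K. \<forall>i\<le>L. y (t+i) \<in> ball (T q i) \<rho>)}"
proof -
  interpret prob_space P by (rule ps)
  define B where "B q i = (if i = 0 then D q else ball (T q i) \<rho>)" for q i
  define E where "E q = {y. \<Phi> y \<and> (\<forall>i\<le>L. y (t+i) \<in> B q i)}" for q
  define F where "F q = {y. \<Phi> y \<and> y t \<in> D q}" for q
  have Bb: "B q i \<in> sets borel" if "q < K" for q i using Db[OF that] unfolding B_def by auto
  have Bsub: "B q i \<subseteq> ball (T q i) \<rho>" if "q < K" for q i using Dball[OF that] unfolding B_def by auto
  have lb: "a ^ L * measure P (F q) \<le> measure P (E q)" if q: "q < K" for q
  proof -
    have "a ^ L * measure P {y. \<Phi> y \<and> y t \<in> B q 0} \<le> measure P {y. \<Phi> y \<and> (\<forall>i\<le>L. y (t+i) \<in> B q i)}"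
    proof (rule tube_lb[OF dP mP _ a0])
      show "B q i \<in> sets borel" for i by (rule Bb[OF q])
      fix i x assume "i < L" "x \<in> B q i"
      then have "x \<in> ball (T q i) \<rho>" using Bsub[OF q] by blast
      then show "a \<le> trans_prob \<mu> f d x (B q (Suc i))" using tr[OF q \<open>i < L\<close>] unfolding B_def by simp
    qed
    then show ?thesis unfolding E_def F_def B_def by simp
  qed
  have Fs: "F q \<in> sets P" if "q < K" for q unfolding F_def
    by (rule ev_sets[of t]) (intro dep_conj dP dep_comp order_refl,
        rule pred_intros_logic(3)[OF mP mpred_comp[OF order_refl Db[OF that]]])
  have Es: "E q \<in> sets P" if "q < K" for q unfolding E_def
  proof (rule ev_sets[of "t+L"])
    show "dep (t + L) (\<lambda>y. \<Phi> y \<and> (\<forall>i\<le>L. y (t + i) \<in> B q i))"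
      by (intro dep_conj dep_mono[OF dP] dep_all_le dep_comp) auto
    have m1: "mpred (t+L) \<Phi>" by (rule mpred_mono[OF dP mP]) simp
    have m2: "mpred (t+L) (\<lambda>y. \<forall>i\<le>L. y (t + i) \<in> B q i)"
      by (rule mpred_all_le, rule mpred_comp) (simp_all add: Bb[OF that])
    show "mpred (t + L) (\<lambda>y. \<Phi> y \<and> (\<forall>i\<le>L. y (t + i) \<in> B q i))" by (rule pred_intros_logic(3)[OF m1 m2])
  qed
  have Ffin: "emeasure P (F q) \<noteq> \<infinity>" for q by (simp add: emeasure_eq_measure)
  have Efin: "emeasure P (E q) \<noteq> \<infinity>" for q by (simp add: emeasure_eq_measure)
  have dF: "disjoint_family_on F {..<K}" using disj unfolding disjoint_family_on_def F_def by blast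
  have dE: "disjoint_family_on E {..<K}"
  proof -
    have "E q \<subseteq> F q" for q unfolding E_def F_def B_def by auto
    then show ?thesis using dF unfolding disjoint_family_on_def by blast
  qed
  have "{y. \<Phi> y \<and> y t \<in> Q} = (\<Union>q<K. F q)" unfolding F_def using DQ by blast
  then have "measure P {y. \<Phi> y \<and> y t \<in> Q} = (\<Sum>q<K. measure P (F q))"
  proof -
    have "F ` {..<K} \<subseteq> events" using Fs by blast
    then show ?thesis using measure_finite_Union[of "{..<K}" F P] \<open>{y. \<Phi> y \<and> y t \<in> Q} = (\<Union>q<K. F q)\<close> dF Ffin by simp
  qed
  then have "a ^ L * measure P {y. \<Phi> y \<and> y t \<in> Q} = (\<Sum>q<K. a ^ L * measure P (F q))"
    by (simp add: sum_distrib_left)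
  also have "\<dots> \<le> (\<Sum>q<K. measure P (E q))" by (rule sum_mono) (use lb in simp)
  also have "\<dots> = measure P (\<Union>q<K. E q)"
  proof -
    have "E ` {..<K} \<subseteq> events" using Es by blast
    then show ?thesis using measure_finite_Union[of "{..<K}" E P] dE Efin by simp
  qed
  also have "\<dots> \<le> measure P {y. \<Phi> y \<and> y t \<in> Q \<and> (\<exists>q<K. \<forall>i\<le>L. y (t+i) \<in> ball (T q i) \<rho>)}"
  proof (rule finite_measure_mono)
    show "(\<Union>q<K. E q) \<subseteq> {y. \<Phi> y \<and> y t \<in> Q \<and> (\<exists>q<K. \<forall>i\<le>L. y (t+i) \<in> ball (T q i) \<rho>)}"
    proof
      fix y assume "y \<in> (\<Union>q<K. E q)"
      then obtain q where q: "q < K" "y \<in> E q" by blast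
      then have "y t \<in> D q" unfolding E_def B_def by (metis (mono_tags, lifting) add_0_right le0 mem_Collect_eq)
      moreover have "\<forall>i\<le>L. y (t+i) \<in> ball (T q i) \<rho>" using q Bsub[OF q(1)] unfolding E_def by blast
      ultimately show "y \<in> {y. \<Phi> y \<and> y t \<in> Q \<and> (\<exists>q<K. \<forall>i\<le>L. y (t+i) \<in> ball (T q i) \<rho>)}"
        using q DQ unfolding E_def by blast
    qed
    show "{y. \<Phi> y \<and> y t \<in> Q \<and> (\<exists>q<K. \<forall>i\<le>L. y (t+i) \<in> ball (T q i) \<rho>)} \<in> sets P"
    proof (rule ev_sets[of "t+L"])
      show "dep (t + L) (\<lambda>y. \<Phi> y \<and> y t \<in> Q \<and> (\<exists>q<K. \<forall>i\<le>L. y (t+i) \<in> ball (T q i) \<rho>))"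
        by (intro dep_conj dep_mono[OF dP] dep_ex_less dep_all_le dep_comp) auto
      have m1: "mpred (t+L) \<Phi>" by (rule mpred_mono[OF dP mP]) simp
      have m2: "mpred (t+L) (\<lambda>y. y t \<in> Q)" by (rule mpred_comp[OF _ Qb]) simp
      have m3: "mpred (t+L) (\<lambda>y. \<exists>q<K. \<forall>i\<le>L. y (t+i) \<in> ball (T q i) \<rho>)"
        by (rule mpred_ex_less, rule mpred_all_le, rule mpred_comp) simp_all
      show "mpred (t + L) (\<lambda>y. \<Phi> y \<and> y t \<in> Q \<and> (\<exists>q<K. \<forall>i\<le>L. y (t+i) \<in> ball (T q i) \<rho>))"
        by (rule pred_intros_logic(3)[OF m1 pred_intros_logic(3)[OF m2 m3]])
    qed
  qed
  finally show ?thesis .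
qed

end


lemma le_of_all_inv2:
  fixes a e :: real
  assumes "\<forall>k::nat. a \<le> e + 2 / (real k + 1)"
  shows "a \<le> e"
proof (rule ccontr)
  assume "\<not> a \<le> e"
  then obtain k where "inverse (real (Suc k)) < (a - e)/2" using reals_Archimedean[of "(a - e)/2"] by auto
  then show False using assms[rule_format, of k] by (simp add: field_simps)
qed

context dyn begin

lemma dense_ex: "\<exists>D::'a set. countable D \<and> (\<forall>a e. e > 0 \<longrightarrow> (\<exists>p\<in>D. dist p a < e))"
proof -
  have tb: "\<forall>e>0. \<exists>k::'a set. finite k \<and> k \<subseteq> UNIV \<and> UNIV \<subseteq> (\<Union>x\<in>k. ball x e)"
    by (rule seq_compact_imp_totally_bounded[OF compact_imp_seq_compact[OF cpt]])
  have ex: "\<forall>n::nat. \<exists>k::'a set. finite k \<and> UNIV \<subseteq> (\<Union>x\<in>k. ball x (1 / (real n + 1)))"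
  proof
    fix n :: nat
    have pos: "1 / (real n + 1) > 0" by simp
    obtain k :: "'a set" where "finite k" "UNIV \<subseteq> (\<Union>x\<in>k. ball x (1 / (real n + 1)))" using tb[rule_format, OF pos] by auto
    then show "\<exists>k::'a set. finite k \<and> UNIV \<subseteq> (\<Union>x\<in>k. ball x (1 / (real n + 1)))" by blast
  qed
  have "\<exists>Nt::nat \<Rightarrow> 'a set. \<forall>n. finite (Nt n) \<and> UNIV \<subseteq> (\<Union>x\<in>Nt n. ball x (1 / (real n + 1)))" by (rule choice[OF ex])
  then obtain Nt :: "nat \<Rightarrow> 'a set" where Nt: "\<forall>n. finite (Nt n) \<and> UNIV \<subseteq> (\<Union>x\<in>Nt n. ball x (1 / (real n + 1)))"
    by blast
  define D where "D = (\<Union>n. Nt n)"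
  have "countable D" unfolding D_def by (rule countable_UN) (use Nt countable_finite in auto)
  moreover have "\<exists>p\<in>D. dist p a < e" if e0: "e > 0" for a e
  proof -
    obtain n where n: "inverse (real (Suc n)) < e" using reals_Archimedean[OF e0] by blast
    have "a \<in> (\<Union>x\<in>Nt n. ball x (1 / (real n + 1)))" using Nt by blast
    then obtain x where "x \<in> Nt n" "a \<in> ball x (1 / (real n + 1))" by blast
    then have "x \<in> D" "dist x a < 1 / (real n + 1)" unfolding D_def by auto
    moreover have "1 / (real n + 1) < e" using n by (simp add: inverse_eq_divide add.commute)
    ultimately have "x \<in> D" "dist x a < e" by linarith+
    then show ?thesis by blast
  qed
  ultimately show ?thesis by blast
qed

abbreviation "MM \<equiv> Pi\<^sub>M UNIV (\<lambda>_. (borel :: 'a measure))"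

lemma spMM: "space MM = UNIV" by (simp add: space_PiM)

lemma comp_set: "B \<in> sets borel \<Longrightarrow> {y. y k \<in> B} \<in> sets MM"
proof -
  assume B: "B \<in> sets borel"
  have "(\<lambda>y. y k) -` B \<inter> space MM \<in> sets MM"
    by (rule measurable_sets[OF measurable_component_singleton[of k UNIV "\<lambda>_. borel"] B]) simp
  then show ?thesis by (simp add: spMM vimage_def)
qed

lemma fvim_borel: "open B \<Longrightarrow> f -` B \<in> sets borel"
proof -
  assume "open B"
  then have "open (f -` B \<inter> UNIV)" using cf continuous_on_open_vimage[of UNIV f] by blast
  then show ?thesis by simp
qed

lemma Sh_meas:
  shows "Sh f y0 d eps \<in> sets MM"
proof -
  obtain D :: "'a set" where D: "countable D" "\<And>a e. e > 0 \<Longrightarrow> \<exists>p\<in>D. dist p a < e" using dense_ex by blast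
  have UN: "UNIV \<in> sets MM" using sets.top[of MM] unfolding spMM .
  define PT where "PT n = (\<Inter>k. \<Union>p\<in>D. {y. y (Suc n) \<in> ball p (1 / (real k + 1))} \<inter> {y. y n \<in> f -` ball p (d + 1 / (real k + 1))})" for n
  have PTeq: "{y. dist (y (Suc n)) (f (y n)) \<le> d} = PT n" for n
  proof
    show "{y. dist (y (Suc n)) (f (y n)) \<le> d} \<subseteq> PT n"
    proof
      fix y assume "y \<in> {y. dist (y (Suc n)) (f (y n)) \<le> d}"
      then have yd: "dist (y (Suc n)) (f (y n)) \<le> d" by simp
      show "y \<in> PT n" unfolding PT_def
      proof (intro INT_I)
        fix k :: nat
        obtain p where p: "p \<in> D" "dist p (y (Suc n)) < 1 / (real k + 1)" using D(2)[of "1 / (real k + 1)" "y (Suc n)"] by auto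
        have "dist p (f (y n)) \<le> dist p (y (Suc n)) + dist (y (Suc n)) (f (y n))" by (rule dist_triangle)
        then have "dist p (f (y n)) < d + 1 / (real k + 1)" using p yd by linarith
        then show "y \<in> (\<Union>p\<in>D. {y. y (Suc n) \<in> ball p (1 / (real k + 1))} \<inter> {y. y n \<in> f -` ball p (d + 1 / (real k + 1))})"
          using p by auto
      qed
    qed
    show "PT n \<subseteq> {y. dist (y (Suc n)) (f (y n)) \<le> d}"
    proof
      fix y assume y: "y \<in> PT n"
      have "dist (y (Suc n)) (f (y n)) \<le> d + 2 / (real k + 1)" for k
      proof -
        obtain p where "dist p (y (Suc n)) < 1 / (real k + 1)" "dist p (f (y n)) < d + 1 / (real k + 1)"
          using y unfolding PT_def by auto
        moreover have "dist (y (Suc n)) (f (y n)) \<le> dist p (y (Suc n)) + dist p (f (y n))"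
          by (rule dist_triangle3)
        ultimately show ?thesis by simp
      qed
      then show "y \<in> {y. dist (y (Suc n)) (f (y n)) \<le> d}" using le_of_all_inv2 by auto
    qed
  qed
  have PTs: "PT n \<in> sets MM" for n unfolding PT_def
  proof (rule sets.countable_INT''[OF UN countableI_type])
    fix k :: nat
    show "(\<Union>p\<in>D. {y. y (Suc n) \<in> ball p (1 / (real k + 1))} \<inter> {y. y n \<in> f -` ball p (d + 1 / (real k + 1))}) \<in> sets MM"
    proof (rule sets.countable_UN''[OF D(1)])
      fix p
      have "{y. y (Suc n) \<in> ball p (1 / (real k + 1))} \<in> sets MM" by (rule comp_set, rule borel_open, rule open_ball)
      moreover have "{y. y n \<in> f -` ball p (d + 1 / (real k + 1))} \<in> sets MM"
        by (rule comp_set, rule fvim_borel, rule open_ball)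
      ultimately show "{y. y (Suc n) \<in> ball p (1 / (real k + 1))} \<inter> {y. y n \<in> f -` ball p (d + 1 / (real k + 1))} \<in> sets MM"
        by (rule sets.Int)
    qed
  qed
  define SS where "SS = (\<Inter>N. \<Inter>k. \<Union>x\<in>D. \<Inter>n\<in>{..N}. {y. y n \<in> ball ((f^^n) x) (eps + 1 / (real k + 1))})"
  have A1: "(\<Inter>n\<in>{..N}. {y. y n \<in> ball ((f^^n) x) (eps + 1 / (real k + 1))}) \<in> sets MM" for N k x
  proof (rule sets.countable_INT''[OF UN countable_finite[OF finite_atMost]])
    fix n
    show "{y. y n \<in> ball ((f^^n) x) (eps + 1 / (real k + 1))} \<in> sets MM" by (rule comp_set, rule borel_open, rule open_ball)
  qed
  have A2: "(\<Union>x\<in>D. \<Inter>n\<in>{..N}. {y. y n \<in> ball ((f^^n) x) (eps + 1 / (real k + 1))}) \<in> sets MM" for N k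
    by (rule sets.countable_UN''[OF D(1) A1])
  have A3: "(\<Inter>k. \<Union>x\<in>D. \<Inter>n\<in>{..N}. {y. y n \<in> ball ((f^^n) x) (eps + 1 / (real k + 1))}) \<in> sets MM" for N
    by (rule sets.countable_INT''[OF UN countableI_type A2])
  have SSs: "SS \<in> sets MM" unfolding SS_def
    by (rule sets.countable_INT''[OF UN countableI_type A3])
  have SSeq: "{y. shadowed f eps y} = SS"
  proof
    show "{y. shadowed f eps y} \<subseteq> SS"
    proof
      fix y assume "y \<in> {y. shadowed f eps y}"
      then obtain x0 where x0: "\<forall>n. dist (y n) ((f^^n) x0) \<le> eps" unfolding shadowed_def by blast
      show "y \<in> SS" unfolding SS_def
      proof (intro INT_I)
        fix N k :: nat
        obtain \<delta> where dl: "\<delta> > 0" "\<forall>u v. dist u v < \<delta> \<longrightarrow> (\<forall>n\<le>N. dist ((f^^n) u) ((f^^n) v) < 1 / (real k + 1))"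
          using ucN[of "1 / (real k + 1)" N] by auto
        obtain x where x: "x \<in> D" "dist x x0 < \<delta>" using D(2)[OF dl(1)] by blast
        have "y n \<in> ball ((f^^n) x) (eps + 1 / (real k + 1))" if "n \<le> N" for n
        proof -
          have "dist ((f^^n) x) (y n) \<le> dist ((f^^n) x) ((f^^n) x0) + dist (y n) ((f^^n) x0)" by (rule dist_triangle2)
          moreover have "dist ((f^^n) x) ((f^^n) x0) < 1 / (real k + 1)" using dl x that by blast
          moreover have "dist (y n) ((f^^n) x0) \<le> eps" using x0 by blast
          ultimately have "dist ((f^^n) x) (y n) < eps + 1 / (real k + 1)" by linarith
          then show ?thesis by simp
        qed
        then show "y \<in> (\<Union>x\<in>D. \<Inter>n\<in>{..N}. {y. y n \<in> ball ((f^^n) x) (eps + 1 / (real k + 1))})"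
          using x by blast
      qed
    qed
    show "SS \<subseteq> {y. shadowed f eps y}"
    proof
      fix y assume y: "y \<in> SS"
      have "\<exists>x. \<forall>i\<le>N. dist (y i) ((f^^i) x) \<le> eps" for N
      proof (rule shadow_approx, intro allI)
        fix k :: nat
        have "y \<in> (\<Union>x\<in>D. \<Inter>n\<in>{..N}. {y. y n \<in> ball ((f^^n) x) (eps + 1 / (real k + 1))})"
          using y unfolding SS_def by blast
        then obtain x where "\<forall>n\<in>{..N}. y n \<in> ball ((f^^n) x) (eps + 1 / (real k + 1))" by blast
        then have "\<forall>i\<le>N. dist (y i) ((f^^i) x) \<le> eps + 1 / (real k + 1)"
          by (auto simp: dist_commute intro: less_imp_le)
        then show "\<exists>x. \<forall>i\<le>N. dist (y i) ((f^^i) x) \<le> eps + 1 / (real k + 1)" by blast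
      qed
      then have "\<exists>x. \<forall>i. dist (y i) ((f^^i) x) \<le> eps" by (intro shadow_fin) blast
      then show "y \<in> {y. shadowed f eps y}" unfolding shadowed_def by simp
    qed
  qed
  have pt: "y \<in> PT n \<longleftrightarrow> dist (y (Suc n)) (f (y n)) \<le> d" for y n using PTeq[of n] by blast
  have ss: "y \<in> SS \<longleftrightarrow> shadowed f eps y" for y using SSeq by blast
  have eq: "Sh f y0 d eps = {y. y 0 \<in> {y0}} \<inter> (\<Inter>n. PT n) \<inter> SS"
    by (simp add: Sh_def Omega_def is_pseudotrajectory_def pt ss set_eq_iff)
  have s1: "{y. y 0 \<in> {y0}} \<in> sets MM" by (rule comp_set, rule borel_closed, rule closed_singleton)
  have s2: "(\<Inter>n. PT n) \<in> sets MM" by (rule sets.countable_INT''[OF UN countableI_type PTs])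
  have "{y. y 0 \<in> {y0}} \<inter> (\<Inter>n. PT n) \<inter> SS \<in> sets MM"
    by (rule sets.Int[OF sets.Int[OF s1 s2] SSs])
  then show ?thesis by (simp only: eq)
qed

end


lemma Tt_le:
  fixes n0 j m i L :: nat
  assumes "j < m" "i \<le> L"
  shows "n0 + j * Suc L + i \<le> n0 + m * Suc L"
proof -
  have "Suc j * Suc L \<le> m * Suc L" using assms(1) by (intro mult_le_mono1) simp
  then show ?thesis using assms(2) by simp
qed

context dyn begin

lemma core:
  fixes \<mu> :: "'a measure" and P :: "(nat \<Rightarrow> 'a) measure"
  assumes mk: "mk \<mu> f y0 d P" and sm: "sets \<mu> = sets borel" and fm: "finite_measure \<mu>"
    and pos: "\<And>V. open V \<Longrightarrow> V \<noteq> {} \<Longrightarrow> emeasure \<mu> V > 0"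
    and d: "0 < d"
    and eps1: "eps1 > 0" and w0: "w 0 \<in> \<Lambda>" and wst: "\<forall>i<N. dist (w (Suc i)) (f (w i)) \<le> d/2"
    and wbad: "\<not> (\<exists>x. \<forall>i\<le>N. dist (w i) ((f^^i) x) \<le> eps1)"
    and cQ: "compact Q"
    and trapQ: "\<And>z n. z 0 = y0 \<Longrightarrow> (\<forall>i. dist (z (Suc i)) (f (z i)) \<le> d) \<Longrightarrow> n0 \<le> n \<Longrightarrow> z n \<in> Q"
    and attrQ: "\<forall>\<beta>>0. \<exists>N. \<forall>x\<in>Q. \<forall>n\<ge>N. infdist ((f^^n) x) \<Lambda> < \<beta>"
  shows "measure P (Sh f y0 d (eps1/2)) = 0"
proof -
  interpret mk \<mu> f y0 d P by (rule mk)
  interpret prob_space P by (rule ps)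
  interpret mu: finite_measure \<mu> by (rule fm)
  define \<eta> where "\<eta> = 3*d/4"
  have eta: "0 < \<eta>" "\<eta> < d" "d/2 < \<eta>" using d unfolding \<eta>_def by auto
  from rob[OF eta(2)] obtain \<rho>0 where r0': "\<rho>0 > 0 \<and> (\<forall>u v x w. dist v (f u) < \<eta> \<longrightarrow> dist x u < \<rho>0 \<longrightarrow> dist w v < \<rho>0 \<longrightarrow> dist w (f x) < d)" ..
  note r0 = r0'[THEN conjunct1] r0'[THEN conjunct2]
  define \<rho> where "\<rho> = min \<rho>0 (eps1/2)"
  have rho: "\<rho> > 0" "\<rho> \<le> \<rho>0" "\<rho> \<le> eps1/2" using r0 eps1 unfolding \<rho>_def by auto
  obtain N1 where N1: "\<forall>x\<in>Q. \<forall>n\<ge>N1. infdist ((f^^n) x) \<Lambda> < \<eta>" using attrQ eta(1) by blast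
  have wst': "\<forall>i<N. dist (w (Suc i)) (f (w i)) < \<eta>"
  proof (intro allI impI)
    fix i assume "i < N"
    then have "dist (w (Suc i)) (f (w i)) \<le> d/2" using wst by blast
    then show "dist (w (Suc i)) (f (w i)) < \<eta>" using eta(3) by linarith
  qed
  have tubes: "\<exists>L0. \<forall>L\<ge>L0. \<exists>p s. p 0 = z \<and> pch \<eta> L p \<and> s + N \<le> L \<and> (\<forall>i\<le>N. p (s+i) = w i)"
    if zQ: "z \<in> Q" for z
  proof (rule tube_exists[OF _ wst' eta(1)])
    have "Suc N1 \<ge> N1" by simp
    then have "infdist ((f^^(Suc N1)) z) \<Lambda> < \<eta>" using N1 zQ by blast
    then show "rch \<eta> z (w 0)" by (rule rch_pt[OF _ w0 eta(1)])
  qed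
  have tbQ: "\<forall>e>0. \<exists>k::'a set. finite k \<and> k \<subseteq> Q \<and> Q \<subseteq> (\<Union>x\<in>k. ball x e)"
    by (rule seq_compact_imp_totally_bounded[OF compact_imp_seq_compact[OF cQ]])
  obtain Z :: "'a set" where Z: "finite Z" "Z \<subseteq> Q" "Q \<subseteq> (\<Union>x\<in>Z. ball x \<rho>)"
    using tbQ[rule_format, OF rho(1)] by blast
  obtain zs where zs: "set zs = Z" using finite_list[OF Z(1)] by blast
  define K where "K = length zs"
  have zsQ: "zs ! q \<in> Q" if "q < K" for q using that zs Z(2) unfolding K_def by (metis nth_mem subsetD)
  have "\<forall>z\<in>Z. \<exists>L0. \<forall>L\<ge>L0. \<exists>p s. p 0 = z \<and> pch \<eta> L p \<and> s + N \<le> L \<and> (\<forall>i\<le>N. p (s+i) = w i)"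
    using tubes Z(2) by blast
  then obtain Lf where Lf: "\<forall>z\<in>Z. \<forall>L\<ge>Lf z. \<exists>p s. p 0 = z \<and> pch \<eta> L p \<and> s + N \<le> L \<and> (\<forall>i\<le>N. p (s+i) = w i)"
    by (rule bchoice[THEN exE]) blast
  define Lmax where "Lmax = (\<Sum>z\<in>Z. Lf z)"
  have LfL: "Lf z \<le> Lmax" if "z \<in> Z" for z unfolding Lmax_def by (rule member_le_sum[OF that]) (simp_all add: Z(1))
  have "\<forall>q. \<exists>p. \<exists>s. q < K \<longrightarrow> (p 0 = zs ! q \<and> pch \<eta> Lmax p \<and> s + N \<le> Lmax \<and> (\<forall>i\<le>N. p (s+i) = w i))"
  proof
    fix q
    show "\<exists>p. \<exists>s. q < K \<longrightarrow> (p 0 = zs ! q \<and> pch \<eta> Lmax p \<and> s + N \<le> Lmax \<and> (\<forall>i\<le>N. p (s+i) = w i))"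
    proof (cases "q < K")
      case True
      then have "zs ! q \<in> Z" using zs unfolding K_def by auto
      then show ?thesis using Lf LfL by blast
    qed simp
  qed
  then obtain T where "\<forall>q. \<exists>s. q < K \<longrightarrow> (T q 0 = zs ! q \<and> pch \<eta> Lmax (T q) \<and> s + N \<le> Lmax \<and> (\<forall>i\<le>N. T q (s+i) = w i))"
    by (rule choice[THEN exE]) blast
  then obtain S where TS: "\<forall>q. q < K \<longrightarrow> (T q 0 = zs ! q \<and> pch \<eta> Lmax (T q) \<and> S q + N \<le> Lmax \<and> (\<forall>i\<le>N. T q (S q + i) = w i))"
    by (rule choice[THEN exE]) blast
  define D where "D q = Q \<inter> (ball (zs ! q) \<rho> - (\<Union>q'\<in>{..<q}. ball (zs ! q') \<rho>))" for q
  have Qb: "Q \<in> sets borel" using cQ by (simp add: borel_closed compact_imp_closed)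
  have Db: "D q \<in> sets borel" for q
  proof -
    have "open (\<Union>q'\<in>{..<q}. ball (zs ! q') \<rho>)" by (intro open_UN) simp
    then have "ball (zs ! q) \<rho> - (\<Union>q'\<in>{..<q}. ball (zs ! q') \<rho>) \<in> sets borel"
      by (intro sets.Diff borel_open) simp_all
    then show ?thesis unfolding D_def using Qb by (rule sets.Int[rotated])
  qed
  have disj: "disjoint_family_on D {..<K}"
    unfolding disjoint_family_on_def
  proof (intro ballI impI)
    fix q1 q2 assume "q1 \<in> {..<K}" "q2 \<in> {..<K}" "q1 \<noteq> q2"
    show "D q1 \<inter> D q2 = {}"
    proof (cases "q1 < q2")
      case True then show ?thesis unfolding D_def by blast
    next
      case False then have "q2 < q1" using \<open>q1 \<noteq> q2\<close> by simp
      then show ?thesis unfolding D_def by blast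
    qed
  qed
  have DQ: "(\<Union>q<K. D q) = Q"
  proof
    show "(\<Union>q<K. D q) \<subseteq> Q" unfolding D_def by blast
    show "Q \<subseteq> (\<Union>q<K. D q)"
    proof
      fix x assume xQ: "x \<in> Q"
      then obtain z where "z \<in> Z" "x \<in> ball z \<rho>" using Z(3) by blast
      then obtain q where "q < K" "x \<in> ball (zs ! q) \<rho>" using zs unfolding K_def by (metis in_set_conv_nth)
      then have ex: "\<exists>q. q < K \<and> x \<in> ball (zs ! q) \<rho>" by blast
      obtain q where q: "q < K \<and> x \<in> ball (zs ! q) \<rho>" "\<forall>q'<q. \<not> (q' < K \<and> x \<in> ball (zs ! q') \<rho>)"
        using ex exists_least_iff[of "\<lambda>q. q < K \<and> x \<in> ball (zs ! q) \<rho>"] by blast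
      have "\<forall>q'<q. x \<notin> ball (zs ! q') \<rho>" using q by auto
      then have "x \<in> D q" unfolding D_def using xQ q(1) by blast
      then show "x \<in> (\<Union>q<K. D q)" using q(1) by blast
    qed
  qed
  have Dball: "D q \<subseteq> ball (T q 0) \<rho>" if "q < K" for q using TS that unfolding D_def by auto
  define Ms where "Ms = (\<lambda>(q,i). measure \<mu> (ball (T q i) \<rho>)) ` ({..<K} \<times> {..Lmax})"
  define m where "m = Min (insert 1 Ms)"
  have ballpos: "measure \<mu> (ball c \<rho>) > 0" for c
  proof -
    have "emeasure \<mu> (ball c \<rho>) > 0" using pos[of "ball c \<rho>"] rho(1) by simp
    then show ?thesis by (simp add: mu.emeasure_eq_measure)
  qed
  have finMs: "finite Ms" unfolding Ms_def by simp
  have m: "m > 0" unfolding m_def using finMs ballpos unfolding Ms_def by (subst Min_gr_iff) auto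
  have mle: "m \<le> measure \<mu> (ball (T q i) \<rho>)" if "q < K" "i \<le> Lmax" for q i
    unfolding m_def using finMs that unfolding Ms_def by (intro Min_le) force+
  define mU where "mU = measure \<mu> UNIV"
  have mU: "mU > 0"
  proof -
    have "emeasure \<mu> UNIV > 0" using pos[of UNIV] by simp
    then show ?thesis unfolding mU_def by (simp add: mu.emeasure_eq_measure)
  qed
  define a where "a = min 1 (m / mU)"
  have a: "0 < a" "a \<le> 1" using m mU unfolding a_def by auto
  have tr: "a \<le> trans_prob \<mu> f d x (ball (T q (Suc i)) \<rho>)"
    if q: "q < K" and i: "i < Lmax" and x: "x \<in> ball (T q i) \<rho>" for q i x
  proof -
    have pc: "pch \<eta> Lmax (T q)" using TS q by blast
    then have st: "dist (T q (Suc i)) (f (T q i)) < \<eta>" using i unfolding pch_def by blast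
    have "ball (T q (Suc i)) \<rho> \<subseteq> ball (f x) d"
    proof
      fix v assume "v \<in> ball (T q (Suc i)) \<rho>"
      then have "dist v (T q (Suc i)) < \<rho>0" using rho by (simp add: dist_commute)
      moreover have "dist x (T q i) < \<rho>0" using x rho by (simp add: dist_commute)
      ultimately have "dist v (f x) < d" using r0(2) st by blast
      then show "v \<in> ball (f x) d" by (simp add: dist_commute)
    qed
    note tp_lb[OF sm fm pos this d]
    then have "measure \<mu> (ball (T q (Suc i)) \<rho>) / mU \<le> trans_prob \<mu> f d x (ball (T q (Suc i)) \<rho>)"
      unfolding mU_def .
    moreover have "m / mU \<le> measure \<mu> (ball (T q (Suc i)) \<rho>) / mU"
      using mle[OF q, of "Suc i"] i mU by (simp add: divide_right_mono)
    moreover have "a \<le> m / mU" unfolding a_def by simp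
    ultimately show ?thesis by linarith
  qed
  define c where "c = a ^ Lmax"
  have c: "0 < c" "c \<le> 1" using a unfolding c_def by (auto simp: power_le_one)
  define Tt where "Tt j = n0 + j * Suc Lmax" for j
  define bad where "bad j y = (\<exists>q<K. \<forall>i\<le>Lmax. y (Tt j + i) \<in> ball (T q i) \<rho>)" for j y
  define G where "G m y = (\<forall>j<m. y (Tt j) \<in> Q \<and> \<not> bad j y)" for m y
  have dbad: "dep (Tt j + Lmax) (bad j)" for j unfolding bad_def
    by (intro dep_ex_less dep_all_le dep_comp) simp
  have mbad: "mpred (Tt j + Lmax) (bad j)" for j unfolding bad_def
    by (rule mpred_ex_less, rule mpred_all_le, rule mpred_comp) simp_all
  have dG: "dep (Tt m) (G m)" for m unfolding G_def
  proof (rule dep_all_less)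
    fix j assume j: "j < m"
    have "Tt j + Lmax \<le> Tt m" unfolding Tt_def using Tt_le[OF j order_refl] by simp
    then show "dep (Tt m) (\<lambda>y. y (Tt j) \<in> Q \<and> \<not> bad j y)"
      by (intro dep_conj dep_not dep_comp dep_mono[OF dbad]) simp_all
  qed
  have mG: "mpred (Tt m) (G m)" for m unfolding G_def
  proof (rule mpred_all_less)
    fix j assume j: "j < m"
    have le: "Tt j + Lmax \<le> Tt m" unfolding Tt_def using Tt_le[OF j order_refl] by simp
    have m1: "mpred (Tt m) (\<lambda>y. y (Tt j) \<in> Q)" by (rule mpred_comp[OF _ Qb]) (use le in simp)
    have m2: "mpred (Tt m) (\<lambda>y. \<not> bad j y)" by (rule pred_intros_logic(2), rule mpred_mono[OF dbad mbad le])
    show "mpred (Tt m) (\<lambda>y. y (Tt j) \<in> Q \<and> \<not> bad j y)" by (rule pred_intros_logic(3)[OF m1 m2])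
  qed
  have Gs: "{y. G m y} \<in> events" for m by (rule ev_sets[OF dG mG])
  have step: "measure P {y. G (Suc m) y} \<le> (1 - c) * measure P {y. G m y}" for m
  proof -
    define A where "A = {y. G m y \<and> y (Tt m) \<in> Q}"
    define B where "B = {y. G m y \<and> y (Tt m) \<in> Q \<and> (\<exists>q<K. \<forall>i\<le>Lmax. y (Tt m + i) \<in> ball (T q i) \<rho>)}"
    have Qs: "{y. y (Tt m) \<in> Q} \<in> events" by (rule ev_sets[OF dep_comp[OF order_refl] mpred_comp[OF order_refl Qb]])
    have As: "A \<in> events" unfolding A_def using sets.Int[OF Gs[of m] Qs] by (simp add: Collect_conj_eq)
    have Bs0: "{y. bad m y} \<in> events" by (rule ev_sets[OF dbad mbad])
    have Bs: "B \<in> events" unfolding B_def using sets.Int[OF As Bs0] unfolding A_def bad_def by (simp add: Collect_conj_eq Int_assoc)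
    have BA: "B \<subseteq> A" unfolding A_def B_def by blast
    have lb: "a ^ Lmax * measure P A \<le> measure P B" unfolding A_def B_def
      by (rule block_lb[OF dG mG Qb Db disj DQ Dball _ tr]) (use a in simp_all)
    have Geq: "G (Suc m) y \<longleftrightarrow> (G m y \<and> y (Tt m) \<in> Q \<and> \<not> bad m y)" for y
      unfolding G_def by (auto simp: less_Suc_eq)
    have eq: "{y. G (Suc m) y} = A - B" unfolding A_def B_def using Geq unfolding bad_def by blast
    have "measure P {y. G (Suc m) y} = measure P A - measure P B" unfolding eq by (rule finite_measure_Diff[OF As Bs BA])
    also have "\<dots> \<le> (1 - c) * measure P A" using lb unfolding c_def by (simp add: algebra_simps)
    also have "\<dots> \<le> (1 - c) * measure P {y. G m y}"
      using c by (intro mult_left_mono finite_measure_mono[OF _ Gs]) (auto simp: A_def)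
    finally show ?thesis .
  qed
  have decay: "measure P {y. G m y} \<le> (1 - c) ^ m" for m
  proof (induction m)
    case 0 then show ?case by simp
  next
    case (Suc m)
    have "measure P {y. G (Suc m) y} \<le> (1 - c) * measure P {y. G m y}" by (rule step)
    also have "\<dots> \<le> (1 - c) * (1 - c) ^ m" using Suc c by (intro mult_left_mono) auto
    finally show ?case by simp
  qed
  have ShG: "Sh f y0 d (eps1/2) \<subseteq> {y. G m y}" for m
  proof
    fix y assume y: "y \<in> Sh f y0 d (eps1/2)"
    then have y0: "y 0 = y0" and pt: "\<forall>i. dist (y (Suc i)) (f (y i)) \<le> d"
      unfolding Sh_def Omega_def is_pseudotrajectory_def by auto
    obtain x0 where x0: "\<forall>n. dist (y n) ((f^^n) x0) \<le> eps1/2" using y unfolding Sh_def shadowed_def by blast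
    have "y (Tt j) \<in> Q \<and> \<not> bad j y" if "j < m" for j
    proof
      show "y (Tt j) \<in> Q" by (rule trapQ[OF y0 pt]) (simp add: Tt_def)
      show "\<not> bad j y"
      proof
        assume "bad j y"
        then obtain q where q: "q < K" "\<forall>i\<le>Lmax. y (Tt j + i) \<in> ball (T q i) \<rho>" unfolding bad_def by blast
        have SN: "S q + N \<le> Lmax" "\<forall>i\<le>N. T q (S q + i) = w i" using TS q(1) by blast+
        define t where "t = Tt j + S q"
        have "\<forall>i\<le>N. dist (w i) ((f^^i) ((f^^t) x0)) \<le> eps1"
        proof (intro allI impI)
          fix i assume i: "i \<le> N"
          have "y (Tt j + (S q + i)) \<in> ball (T q (S q + i)) \<rho>" using q(2) SN(1) i by simp
          then have d1: "dist (w i) (y (t + i)) < \<rho>" using SN(2) i unfolding t_def by (simp add: add.assoc)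
          have d2: "dist (y (t+i)) ((f^^(t+i)) x0) \<le> eps1/2" using x0 by blast
          have e: "(f^^i) ((f^^t) x0) = (f^^(t+i)) x0" by (simp add: funpow_add add.commute)
          have "dist (w i) ((f^^(t+i)) x0) \<le> dist (w i) (y (t + i)) + dist (y (t+i)) ((f^^(t+i)) x0)"
            by (rule dist_triangle)
          then have "dist (w i) ((f^^(t+i)) x0) \<le> eps1" using d1 d2 rho by linarith
          then show "dist (w i) ((f^^i) ((f^^t) x0)) \<le> eps1" using e by simp
        qed
        then show False using wbad by blast
      qed
    qed
    then show "y \<in> {y. G m y}" unfolding G_def by blast
  qed
  have ShP: "measure P (Sh f y0 d (eps1/2)) \<le> (1 - c) ^ m" for m
    using finite_measure_mono[OF ShG[of m] Gs[of m]] decay[of m] by linarith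
  have lim: "(\<lambda>m. (1 - c) ^ m) \<longlonglongrightarrow> 0" using c by (intro LIMSEQ_power_zero) auto
  have "measure P (Sh f y0 d (eps1/2)) \<le> 0"
    by (rule LIMSEQ_le_const[OF lim]) (use ShP in blast)
  then show ?thesis using measure_nonneg[of P] by (simp add: order_antisym)
qed

end

theorem theorem2:
  fixes \<mu> :: "'a::metric_space measure" and f :: "'a \<Rightarrow> 'a" and \<Lambda> :: "'a set"
  assumes "compact (UNIV :: 'a set)"
    and "sets \<mu> = sets borel" and "finite_measure \<mu>"
    and "\<And>U. open U \<Longrightarrow> U \<noteq> {} \<Longrightarrow> emeasure \<mu> U > 0"
    and "\<exists>g. homeomorphism UNIV UNIV f g"
    and "is_attractor f \<Lambda>" and "transitive_set f \<Lambda>"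
    and "\<not> shadowing_on f \<Lambda>"
  shows "\<exists>eps0>0. \<forall>y0 \<in> domain_of_attraction f \<Lambda>. \<exists>d0>0. \<forall>d. 0 < d \<and> d < d0 \<longrightarrow>
           (\<forall>P. random_pt_law \<mu> f y0 d P \<longrightarrow>
              Sh f y0 d eps0 \<in> sets P \<and> emeasure P (Sh f y0 d eps0) = 0)"
proof -
  note cpt = assms(1) and sm = assms(2) and fm = assms(3) and pos = assms(4)
  obtain g where hom: "homeomorphism UNIV UNIV f g" using assms(5) by blast
  obtain U where U: "open U" "\<Lambda> \<subseteq> U" "f ` U \<subseteq> U" "(\<Inter>n. (f ^^ n) ` U) = \<Lambda>"
    using assms(6) unfolding is_attractor_def by blast
  interpret dyn f g \<Lambda> U
    by (rule dyn.intro[OF cpt hom assms(6) assms(7) U])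
  obtain eps1 where eps1: "eps1 > 0" and bp: "\<forall>d>0. \<exists>w N. w 0 \<in> \<Lambda> \<and> (\<forall>i<N. dist (w (Suc i)) (f (w i)) \<le> d)
           \<and> \<not> (\<exists>x. \<forall>i\<le>N. dist (w i) ((f^^i) x) \<le> eps1)"
    using bad_pattern[OF assms(8)] by blast
  show ?thesis
  proof (rule exI[of _ "eps1/2"], intro conjI ballI)
    show "eps1/2 > 0" using eps1 by simp
    fix y0 assume y0: "y0 \<in> domain_of_attraction f \<Lambda>"
    obtain Q n0 d0 where cQ: "compact Q" and d0: "d0 > 0"
      and trp: "\<forall>d z. d < d0 \<longrightarrow> z 0 = y0 \<longrightarrow> (\<forall>i. dist (z (Suc i)) (f (z i)) \<le> d) \<longrightarrow> (\<forall>n\<ge>n0. z n \<in> Q)"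
      and attrQ: "\<forall>\<beta>>0. \<exists>N. \<forall>x\<in>Q. \<forall>n\<ge>N. infdist ((f^^n) x) \<Lambda> < \<beta>"
      using trap[OF y0] by blast
    show "\<exists>d0>0. \<forall>d. 0 < d \<and> d < d0 \<longrightarrow> (\<forall>P. random_pt_law \<mu> f y0 d P \<longrightarrow>
              Sh f y0 d (eps1/2) \<in> sets P \<and> emeasure P (Sh f y0 d (eps1/2)) = 0)"
    proof (intro exI[of _ d0] conjI allI impI)
      show "d0 > 0" by (rule d0)
      fix d P assume dd: "0 < d \<and> d < d0" and law: "random_pt_law \<mu> f y0 d P"
      have mk: "mk \<mu> f y0 d P" by (rule mk.intro[OF law])
      interpret mk \<mu> f y0 d P by (rule mk)
      interpret prob_space P by (rule ps)
      show "Sh f y0 d (eps1/2) \<in> sets P" using Sh_meas[of y0 d "eps1/2"] sP by simp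
      have "d/2 > 0" using dd by simp
      then obtain w N where w: "w 0 \<in> \<Lambda>" "\<forall>i<N. dist (w (Suc i)) (f (w i)) \<le> d/2"
          "\<not> (\<exists>x. \<forall>i\<le>N. dist (w i) ((f^^i) x) \<le> eps1)" using bp by blast
      have trapQ: "z n \<in> Q" if "z 0 = y0" "\<forall>i. dist (z (Suc i)) (f (z i)) \<le> d" "n0 \<le> n" for z n
        using trp dd that by blast
      have dpos: "0 < d" using dd by simp
      have "measure P (Sh f y0 d (eps1/2)) = 0"
        apply (rule core[where \<mu>=\<mu> and P=P and ?y0.0=y0 and d=d and ?eps1.0=eps1 and w=w and N=N and Q=Q and ?n0.0=n0])
        using mk sm fm dpos eps1 w cQ attrQ apply simp_all
         apply (rule pos; assumption)
        apply (rule trapQ; assumption)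
        done
      then show "emeasure P (Sh f y0 d (eps1/2)) = 0" by (simp add: emeasure_eq_measure)
    qed
  qed
qed


end
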